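(* Let $P_Z$ be a distribution on $\mathcal{Z}$, let $S=(Z_1,\ldots,Z_n)$ consist of $n$ i.i.d. samples from $P_Z$, and let $W\in\mathcal{W}$ be a hypothesis produced by a learning algorithm from $S$. Let $\ell:\mathcal{W}\times\mathcal{Z}\to\mathbb{R}$ be a loss function such that $(\mathcal{W},\rho)$ is Polish, $w\mapsto\ell(w,z)$ is $L$-Lipschitz under $\rho$ for every $z$, and $\ell$ takes values in $[a,b]$. Let $J$ be uniformly distributed on $[n]$, independent of $W$ and $S$, and let $R$ be a random variable independent of $S$ and $J$. Then $$\big|\overline{\mathrm{gen}}(W,S)\big| \le (b-a)\,\mathbb{E}\big[\mathrm{TV}(P_{W|S,R},P_{W|S^{-J},R})\big] \le \frac{b-a}{n}\sum_{j=1}^n\mathbb{E}\big[\Psi\big(D(P_{W|S,R}\,\|\,P_{W|S^{-j},R})\big)\big].$$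
   Context: Population risk $\mathscr{L}_{P_Z}(w)=\mathbb{E}[\ell(w,Z)]$; empirical risk $\mathscr{L}_s(w)=\frac1n\sum_i\ell(w,z_i)$; $\overline{\mathrm{gen}}(W,S)=\mathbb{E}[\mathscr{L}_{P_Z}(W)-\mathscr{L}_S(W)]$. $S^{-j}=S\setminus Z_j$ is the dataset with the $j$-th sample removed. $\mathrm{TV}(P,Q)=\sup_A\{P(A)-Q(A)\}$; $D(\cdot\|\cdot)$ is relative entropy; $\Psi(x)=\sqrt{\min\{x/2,1-e^{-x}\}}$. $L$-Lipschitz under $\rho$ means $|f(x)-f(y)|\le L\rho(x,y)$. *)

theory Defs
  imports "HOL-Probability.Probability"
begin

definition tv_dist :: "'a measure \<Rightarrow> 'a measure \<Rightarrow> real" where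
  "tv_dist P Q = (SUP A \<in> sets P. measure P A - measure Q A)"

text \<open>Relative entropy D(P || Q) (natural logarithm), with value infinity
  when P is not absolutely continuous w.r.t. Q or the log-density is not integrable.
  RN_deriv Q P is the density dP/dQ.\<close>
definition rel_entropy :: "'a measure \<Rightarrow> 'a measure \<Rightarrow> ereal" where
  "rel_entropy P Q =
     (if absolutely_continuous Q P \<and> integrable P (\<lambda>x. ln (enn2real (RN_deriv Q P x)))
      then ereal (\<integral>x. ln (enn2real (RN_deriv Q P x)) \<partial>P)
      else \<infinity>)"

definition Psi :: "ereal \<Rightarrow> real" where
  "Psi x = (if x = \<infinity> then 1
            else sqrt (min (real_of_ereal x / 2) (1 - exp (- real_of_ereal x))))"

definition sample_dist :: "nat \<Rightarrow> 'z measure \<Rightarrow> (nat \<Rightarrow> 'z) measure" where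
  "sample_dist n PZ = PiM {0..<n} (\<lambda>_. PZ)"

text \<open>P_{W|S^{-j},R}: given S = s and R = r, the conditional law of W given (S^{-j}, R)
  is obtained by averaging the kernel P_{W|S,R} over the (independent) removed sample Z_j.\<close>
definition loo_kernel ::
  "'z measure \<Rightarrow> ((nat \<Rightarrow> 'z) \<times> 'r \<Rightarrow> 'w measure) \<Rightarrow> nat \<Rightarrow> (nat \<Rightarrow> 'z) \<Rightarrow> 'r \<Rightarrow> 'w measure" where
  "loo_kernel PZ K j s r = PZ \<bind> (\<lambda>z. K (s(j := z), r))"

text \<open>Expected generalization gap E[L_{P_Z}(W) - L_S(W)], where (S,R) ~ P_S x P_R and
  W | (S,R) ~ K(S,R).\<close>
definition exp_gen ::
  "nat \<Rightarrow> 'z measure \<Rightarrow> 'r measure \<Rightarrow> ((nat \<Rightarrow> 'z) \<times> 'r \<Rightarrow> 'w measure) \<Rightarrow> ('w \<Rightarrow> 'z \<Rightarrow> real) \<Rightarrow> real" where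
  "exp_gen n PZ PR K loss =
     (\<integral>sr. (\<integral>w. (\<integral>z. loss w z \<partial>PZ) - (\<Sum>i<n. loss w (fst sr i)) / real n \<partial>K sr)
        \<partial>(sample_dist n PZ \<Otimes>\<^sub>M PR))"

end

theory Submission
  imports Defs
begin

definition DV :: "'a measure \<Rightarrow> 'a measure \<Rightarrow> ('a \<Rightarrow> real) \<Rightarrow> real" where
  "DV P Q g = (\<integral>x. g x \<partial>P) - ln (\<integral>x. exp (g x) \<partial>Q)"

lemma DV_le_rel_entropy:
  assumes P: "prob_space P" and Q: "prob_space Q" and sets_eq: "sets P = sets Q"
    and g[measurable]: "g \<in> borel_measurable Q" and bnd: "\<And>x. \<bar>g x\<bar> \<le> B"
  shows "ereal (DV P Q g) \<le> rel_entropy P Q"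
proof (cases "absolutely_continuous Q P \<and> integrable P (\<lambda>x. ln (enn2real (RN_deriv Q P x)))")
  case False thus ?thesis unfolding rel_entropy_def by (simp only: if_False) simp
next
  case True
  interpret P: prob_space P by fact
  interpret Q: prob_space Q by fact
  define f where "f = RN_deriv Q P"
  define h where "h = (\<lambda>x. ln (enn2real (f x)))"
  have ac: "absolutely_continuous Q P" and hint: "integrable P h"
    using True by (auto simp: h_def f_def)
  have re: "rel_entropy P Q = ereal (\<integral>x. h x \<partial>P)"
    using True by (simp add: rel_entropy_def h_def f_def)
  have fm[measurable]: "f \<in> borel_measurable Q" by (simp add: f_def)
  have dens: "density Q f = P" unfolding f_def by (rule Q.density_RN_deriv[OF ac sets_eq])
  have fin: "AE x in Q. f x \<noteq> \<infinity>" unfolding f_def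
    by (rule Q.RN_deriv_finite[OF _ ac sets_eq]) (rule P.sigma_finite_measure_axioms)
  have finP: "AE x in P. f x \<noteq> \<infinity>" by (rule absolutely_continuous_AE[OF sets_eq ac fin])
  have posP: "AE x in P. f x \<noteq> 0" unfolding dens[symmetric]
    by (subst AE_density) auto
  have gP[measurable]: "g \<in> borel_measurable P" using g measurable_cong_sets[OF sets_eq refl] by blast
  have bnd1: "g x \<le> B" "- B \<le> g x" for x using bnd[of x] by auto
  have intgQ: "integrable Q (\<lambda>x. exp (g x))"
    by (rule Q.integrable_const_bound[where B="exp B"]) (auto intro!: AE_I2 simp: bnd1)
  have intgP: "integrable P g"
    by (rule P.integrable_const_bound[where B="B"]) (auto intro!: AE_I2 simp: bnd)
  define E where "E = (\<integral>x. exp (g x) \<partial>Q)"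
  have "(\<integral>x. exp (- B) \<partial>Q) \<le> E" unfolding E_def
    by (rule integral_mono[OF _ intgQ]) (auto simp: bnd1)
  then have "exp (- B) \<le> E" by (simp add: Q.prob_space)
  then have Epos: "E > 0" using exp_gt_zero[of "-B"] by linarith
  define c where "c = ln E"
  define u where "u x = exp (g x - c) / enn2real (f x)" for x
  have um[measurable]: "u \<in> borel_measurable P"
    proof -
    have "f \<in> borel_measurable P" using fm measurable_cong_sets[OF sets_eq refl] by blast
    then show ?thesis unfolding u_def by measurable
  qed
  have ineq: "AE x in P. g x - h x - c \<le> u x - 1"
    using finP posP
  proof (eventually_elim)
    case (elim x)
    then have fp: "enn2real (f x) > 0" by (simp add: enn2real_positive_iff less_top zero_less_iff_neq_zero)
    have "u x > 0" using fp by (simp add: u_def)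
    then have "ln (u x) \<le> u x - 1" by (rule ln_le_minus_one)
    moreover have "ln (u x) = g x - c - h x" using fp by (simp add: u_def h_def ln_div)
    ultimately show ?case by simp
  qed
  have "(\<integral>\<^sup>+x. ennreal (u x) \<partial>P) = (\<integral>\<^sup>+x. f x * ennreal (u x) \<partial>Q)"
    unfolding dens[symmetric]
  proof (rule nn_integral_density)
    have "u \<in> borel_measurable Q" using um measurable_cong_sets[OF sets_eq refl] by blast
    then show "(\<lambda>x. ennreal (u x)) \<in> borel_measurable Q" by measurable
  qed simp
  also have "\<dots> \<le> (\<integral>\<^sup>+x. ennreal (exp (g x - c)) \<partial>Q)"
  proof (rule nn_integral_mono_AE)
    show "AE x in Q. f x * ennreal (u x) \<le> ennreal (exp (g x - c))"
      using fin
    proof eventually_elim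
      case (elim x)
      show ?case
      proof (cases "f x = 0")
        case True thus ?thesis by simp
      next
        case False
        then have fp: "enn2real (f x) > 0" using elim by (simp add: enn2real_positive_iff less_top zero_less_iff_neq_zero)
        have "f x = ennreal (enn2real (f x))" using elim by (simp add: less_top)
        then have "f x * ennreal (u x) = ennreal (enn2real (f x) * u x)"
          by (metis ennreal_mult' enn2real_nonneg)
        also have "enn2real (f x) * u x = exp (g x - c)" using fp by (simp add: u_def)
        finally show ?thesis by simp
      qed
    qed
  qed
  also have "\<dots> = ennreal (\<integral>x. exp (g x - c) \<partial>Q)"
    by (rule nn_integral_eq_integral) (auto simp: exp_diff intro!: integrable_divide intgQ)
  also have "(\<integral>x. exp (g x - c) \<partial>Q) = 1"
    using Epos by (simp add: exp_diff c_def E_def)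
  finally have nnu: "(\<integral>\<^sup>+x. ennreal (u x) \<partial>P) \<le> 1" by simp
  have u_nn: "AE x in P. 0 \<le> u x" by (auto simp: u_def)
  have intu: "integrable P u"
    by (rule integrableI_nonneg[OF um u_nn]) (use nnu in \<open>simp add: order_le_less_trans\<close>)
  have "(\<integral>x. u x \<partial>P) \<le> 1"
    using nnu by (subst (asm) nn_integral_eq_integral[OF intu u_nn]) simp
  have "(\<integral>x. g x - h x - c \<partial>P) \<le> (\<integral>x. u x - 1 \<partial>P)"
    by (rule integral_mono_AE) (use ineq intgP hint intu in auto)
  also have "\<dots> = (\<integral>x. u x \<partial>P) - 1" using intu by (simp add: P.prob_space)
  finally have "(\<integral>x. g x \<partial>P) - (\<integral>x. h x \<partial>P) - c \<le> 0"
    using \<open>(\<integral>x. u x \<partial>P) \<le> 1\<close> intgP hint by (simp add: P.prob_space)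
  then show ?thesis unfolding re DV_def c_def E_def by simp
qed

lemma binary_pinsker:
  fixes p q k :: real
  assumes q0: "0 \<le> q" and qp: "q < p" and p1: "p \<le> 1"
    and H: "\<And>t. t * p - ln (1 - q + q * exp t) \<le> k"
  shows "(p - q)^2 \<le> k / 2"
proof -
  define t where "t = 4 * (p - q)"
  have t0: "t \<ge> 0" using qp by (simp add: t_def)
  have "- t * q + ln (1 + q * (exp t - 1)) \<le> t^2 / 8"
    using Hoeffdings_lemma_aux[OF t0 q0] by simp
  moreover have "1 + q * (exp t - 1) = 1 - q + q * exp t" by (simp add: algebra_simps)
  ultimately have "t * p - ln (1 - q + q * exp t) \<ge> t * (p - q) - t^2 / 8" by (simp add: algebra_simps)
  with H[of t] have "t * (p - q) - t^2 / 8 \<le> k" by linarith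
  moreover have "t * (p - q) - t^2 / 8 = 2 * (p - q)^2" unfolding t_def power2_eq_square by (simp add: field_simps)
  ultimately show ?thesis by simp
qed

lemma binary_BH:
  fixes p q k :: real
  assumes q0: "0 \<le> q" and qp: "q < p" and p1: "p \<le> 1"
    and H: "\<And>t. t * p - ln (1 - q + q * exp t) \<le> k"
  shows "(p - q)^2 \<le> 1 - exp (- k)"
proof -
  have p0: "p > 0" using q0 qp by linarith
  have H': "exp (- k) \<le> exp (- t * p) * (1 - q + q * exp t)" for t
  proof -
    have X: "1 - q + q * exp t > 0" using q0 qp p1
      by (smt (verit) exp_gt_zero mult_nonneg_nonneg)
    have "- k \<le> - t * p + ln (1 - q + q * exp t)" using H[of t] by simp
    then have "exp (- k) \<le> exp (- t * p + ln (1 - q + q * exp t))" by simp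
    also have "\<dots> = exp (- t * p) * (1 - q + q * exp t)" using X by (simp add: exp_add exp_diff exp_minus field_simps)
    finally show ?thesis .
  qed
  show ?thesis
  proof (cases "q = 0")
    case True
    have "exp (- k) \<le> exp (- ((k + 1) / p) * p)" using H'[of "(k+1)/p"] True by simp
    also have "\<dots> = exp (- k - 1)" using p0 by simp
    finally have False by simp
    then show ?thesis ..
  next
    case False
    then have q0': "q > 0" using q0 by simp
    show ?thesis
    proof (cases "p = 1")
      case True
      have "exp (- k) \<le> exp (- (- ln q) * p) * (1 - q + q * exp (- ln q))" by (rule H')
      also have "\<dots> = q * (2 - q)" using True q0' by (simp add: exp_minus)
      finally show ?thesis using True by (simp add: power2_eq_square algebra_simps)
    next
      case False
      then have p1': "p < 1" using p1 by simp
      define r where "r = p * (1 - q) / (q * (1 - p))"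
      have r0: "r > 0" using p0 q0' p1' qp unfolding r_def by (simp add: divide_pos_pos)
      have X: "1 - q + q * exp (ln r) = (1 - q) / (1 - p)"
        using r0 q0' p1' by (simp add: r_def field_simps)
      have "exp (- k) \<le> exp (- ln r * p) * ((1 - q) / (1 - p))"
        using H'[of "ln r"] X by simp
      then have "- k \<le> ln (exp (- ln r * p) * ((1 - q) / (1 - p)))"
        using qp p1' by (subst ln_ge_iff) auto
      also have "\<dots> = - ln r * p + ln ((1 - q) / (1 - p))"
        using qp p1' by (subst ln_mult) auto
      also have "\<dots> = p * ln (q / p) + (1 - p) * ln ((1 - q) / (1 - p))"
      proof -
        have lr: "ln r = ln p + ln (1 - q) - (ln q + ln (1 - p))"
          unfolding r_def using p0 q0' p1' qp by (simp add: ln_div ln_mult)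
        have e1: "ln (q / p) = ln q - ln p" and e2: "ln ((1 - q) / (1 - p)) = ln (1 - q) - ln (1 - p)"
          using p0 q0' p1' qp by (simp_all add: ln_div)
        show ?thesis unfolding lr e1 e2 by (simp add: algebra_simps)
      qed
      finally have k1: "- k \<le> p * ln (q / p) + (1 - p) * ln ((1 - q) / (1 - p))" .
      define a where "a = sqrt (q / p)"
      define b where "b = sqrt ((1 - q) / (1 - p))"
      have a0: "a > 0" and b0: "b > 0" using p0 q0' p1' qp by (auto simp: a_def b_def)
      have la: "ln (q / p) = 2 * ln a" unfolding a_def using p0 q0'
        by (simp add: ln_sqrt)
      have lb: "ln ((1 - q) / (1 - p)) = 2 * ln b" unfolding b_def using p1' qp
        by (simp add: ln_sqrt)
      have conc: "p * ln a + (1 - p) * ln b \<le> ln (p * a + (1 - p) * b)"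
        using ln_concave a0 b0 p0 p1' by (simp add: concave_on_iff)
      have s: "p * a + (1 - p) * b = sqrt (p * q) + sqrt ((1 - p) * (1 - q))"
      proof -
        have e: "sqrt (x * y) = x * sqrt (y / x)" if "x > 0" "y \<ge> 0" for x y :: real
        proof -
          have "x * y = x^2 * (y / x)" using that by (simp add: power2_eq_square)
          then have "sqrt (x * y) = sqrt (x^2) * sqrt (y / x)" by (metis real_sqrt_mult times_divide_eq_right)
          then show ?thesis using that by simp
        qed
        have "p * a = sqrt (p * q)" unfolding a_def using e[of p q] p0 q0' by simp
        moreover have "(1 - p) * b = sqrt ((1 - p) * (1 - q))" unfolding b_def
          using e[of "1 - p" "1 - q"] p1' qp by simp
        ultimately show ?thesis by simp
      qed
      define S where "S = sqrt (p * q) + sqrt ((1 - p) * (1 - q))"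
      have S0: "S > 0" using p0 q0' p1' qp by (simp add: S_def add_pos_nonneg)
      have "S^2 = p * q + (1 - p) * (1 - q) + 2 * sqrt (p * (1 - p) * (q * (1 - q)))"
      proof -
        have A2: "(sqrt (p * q))^2 = p * q" using p0 q0' by simp
        have B2: "(sqrt ((1 - p) * (1 - q)))^2 = (1 - p) * (1 - q)" using p1' qp by simp
        have AB: "sqrt (p * q) * sqrt ((1 - p) * (1 - q)) = sqrt (p * (1 - p) * (q * (1 - q)))"
        proof -
          have "p * (1 - p) * (q * (1 - q)) = (p * q) * ((1 - p) * (1 - q))" by (simp add: algebra_simps)
          then have "sqrt (p * (1 - p) * (q * (1 - q))) = sqrt ((p * q) * ((1 - p) * (1 - q)))"
            by (rule arg_cong)
          also have "\<dots> = sqrt (p * q) * sqrt ((1 - p) * (1 - q))" by (rule real_sqrt_mult)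
          finally show ?thesis by (rule sym)
        qed
        show ?thesis unfolding S_def power2_sum A2 B2 by (simp only: mult.assoc AB)
      qed
      also have "2 * sqrt (p * (1 - p) * (q * (1 - q))) \<le> p * (1 - p) + q * (1 - q)"
      proof -
        have "sqrt (p * (1 - p) * (q * (1 - q))) \<le> (p * (1 - p) + q * (1 - q)) / 2"
          by (rule arith_geo_mean_sqrt) (use p0 q0' p1' qp in auto)
        then show ?thesis by simp
      qed
      finally have S2: "S^2 \<le> 1 - (p - q)^2" by (simp add: power2_eq_square algebra_simps)
      have "- k \<le> 2 * (p * ln a + (1 - p) * ln b)" using k1 la lb by (simp add: algebra_simps)
      also have "\<dots> \<le> 2 * ln S" using conc s S_def by simp
      also have "\<dots> = ln (S^2)" using S0 by (simp add: ln_realpow)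
      finally have "exp (- k) \<le> S^2" using S0 by (simp add: ln_ge_iff)
      with S2 show ?thesis by simp
    qed
  qed
qed

lemma binary_Psi:
  fixes p q k :: real
  assumes q0: "0 \<le> q" and qp: "q < p" and p1: "p \<le> 1"
    and H: "\<And>t. t * p - ln (1 - q + q * exp t) \<le> k"
  shows "p - q \<le> sqrt (min (k / 2) (1 - exp (- k)))"
proof -
  have "(p - q)^2 \<le> min (k / 2) (1 - exp (- k))"
    using binary_pinsker[OF assms] binary_BH[OF assms] by simp
  then have "sqrt ((p - q)^2) \<le> sqrt (min (k / 2) (1 - exp (- k)))" by (rule real_sqrt_le_mono)
  then show ?thesis using qp by simp
qed

lemma rel_entropy_nonneg:
  assumes P: "prob_space P" and Q: "prob_space Q" and sets_eq: "sets P = sets Q"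
  shows "0 \<le> rel_entropy P Q"
proof -
  have "ereal (DV P Q (\<lambda>x. 0)) \<le> rel_entropy P Q"
    by (rule DV_le_rel_entropy[OF P Q sets_eq, where B=0]) auto
  moreover have "DV P Q (\<lambda>x. 0) = 0" using Q by (simp add: DV_def prob_space.prob_space)
  ultimately show ?thesis by (simp add: zero_ereal_def)
qed

lemma Psi_nonneg: "0 \<le> x \<Longrightarrow> 0 \<le> Psi x"
  by (cases x) (auto simp: Psi_def)

lemma measure_diff_le_Psi:
  assumes P: "prob_space P" and Q: "prob_space Q" and sets_eq: "sets P = sets Q"
    and A: "A \<in> sets P"
  shows "measure P A - measure Q A \<le> Psi (rel_entropy P Q)"
proof -
  interpret P: prob_space P by fact
  interpret Q: prob_space Q by fact
  define p where "p = measure P A"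
  define q where "q = measure Q A"
  have KL0: "0 \<le> rel_entropy P Q" by (rule rel_entropy_nonneg[OF P Q sets_eq])
  have AQ: "A \<in> sets Q" using A sets_eq by simp
  show ?thesis
  proof (cases "p \<le> q")
    case True
    then show ?thesis using Psi_nonneg[OF KL0] unfolding p_def q_def by linarith
  next
    case False
    then have qp: "q < p" by simp
    have q0: "0 \<le> q" and p1: "p \<le> 1" by (auto simp: p_def q_def)
    show ?thesis
    proof (cases "rel_entropy P Q")
      case PInf
      have "p - q \<le> 1" using q0 p1 by simp
      then show ?thesis using PInf unfolding p_def q_def Psi_def by simp
    next
      case MInf
      then show ?thesis using KL0 by simp
    next
      case (real k)
      have H: "t * p - ln (1 - q + q * exp t) \<le> k" for t
      proof -
        have d: "ereal (DV P Q (\<lambda>x. t * indicator A x)) \<le> rel_entropy P Q"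
          by (rule DV_le_rel_entropy[OF P Q sets_eq, where B="\<bar>t\<bar>"])
             (use AQ in \<open>auto simp: indicator_def\<close>)
        have e1: "(\<integral>x. t * indicator A x \<partial>P) = t * p"
        proof -
          have "A \<inter> space P = A" using A sets.sets_into_space by blast
          then show ?thesis using A by (simp add: p_def)
        qed
        have e2: "(\<integral>x. exp (t * indicator A x) \<partial>Q) = 1 - q + q * exp t"
        proof -
          have "(\<lambda>x. exp (t * indicator A x)) = (\<lambda>x. 1 + (exp t - 1) * indicator A x)"
            by (auto simp: indicator_def)
          then have "(\<integral>x. exp (t * indicator A x) \<partial>Q) = (\<integral>x. 1 + (exp t - 1) * indicator A x \<partial>Q)"
            by simp
          also have "\<dots> = 1 + (exp t - 1) * q"
            using AQ by (subst Bochner_Integration.integral_add) (auto simp: q_def Q.prob_space Q.emeasure_finite less_top[symmetric])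
          finally show ?thesis by (simp add: algebra_simps)
        qed
        from d have "ereal (t * p - ln (1 - q + q * exp t)) \<le> ereal k"
          unfolding DV_def e1 e2 real .
        then show ?thesis by simp
      qed
      have "p - q \<le> sqrt (min (k / 2) (1 - exp (- k)))"
        by (rule binary_Psi[OF q0 qp p1 H])
      then show ?thesis using real by (simp add: Psi_def p_def q_def)
    qed
  qed
qed

lemma tv_le_Psi:
  assumes P: "prob_space P" and Q: "prob_space Q" and sets_eq: "sets P = sets Q"
  shows "tv_dist P Q \<le> Psi (rel_entropy P Q)"
  unfolding tv_dist_def
  by (rule cSUP_least) (use measure_diff_le_Psi[OF P Q sets_eq] in auto)

lemma tv_bdd:
  assumes "prob_space P" "prob_space Q"
  shows "bdd_above ((\<lambda>A. measure P A - measure Q A) ` sets P)"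
proof -
  interpret P: prob_space P by fact
  interpret Q: prob_space Q by fact
  have "measure P A - measure Q A \<le> 1" for A using P.prob_le_1[of A] measure_nonneg[of Q A] by linarith
  then show ?thesis by (intro bdd_aboveI[where M=1]) auto
qed

lemma tv_upper:
  assumes "prob_space P" "prob_space Q" "A \<in> sets P"
  shows "measure P A - measure Q A \<le> tv_dist P Q"
  unfolding tv_dist_def using assms by (intro cSUP_upper tv_bdd) auto

lemma tv_sym:
  assumes P: "prob_space P" and Q: "prob_space Q" and sets_eq: "sets P = sets Q"
  shows "tv_dist Q P \<le> tv_dist P Q"
proof -
  interpret P: prob_space P by fact
  interpret Q: prob_space Q by fact
  have sp: "space P = space Q" using sets_eq by (rule sets_eq_imp_space_eq)
  show ?thesis unfolding tv_dist_def[of Q P]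
  proof (rule cSUP_least)
    show "sets Q \<noteq> {}" by auto
    fix A assume A: "A \<in> sets Q"
    then have AP: "A \<in> sets P" using sets_eq by simp
    have c1: "measure P (space P - A) = 1 - measure P A" by (rule P.prob_compl[OF AP])
    have c2: "measure Q (space P - A) = 1 - measure Q A" using sp Q.prob_compl[OF A] by simp
    have "measure Q A - measure P A = measure P (space P - A) - measure Q (space P - A)"
      unfolding c1 c2 by simp
    also have "\<dots> \<le> tv_dist P Q" using AP by (intro tv_upper P Q) auto
    finally show "measure Q A - measure P A \<le> tv_dist P Q" .
  qed
qed

lemma tv_nonneg:
  assumes "prob_space P" "prob_space Q"
  shows "0 \<le> tv_dist P Q"
  using tv_upper[OF assms, of "{}"] by simp

lemma step_approx:
  fixes a d :: real and N :: nat and y :: real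
  assumes d: "d > 0" and ay: "a \<le> y" and yb: "y \<le> a + real N * d"
  defines "s \<equiv> a + d * (\<Sum>i\<in>{1..N}. if a + real i * d \<le> y then 1 else 0)"
  shows "s \<le> y \<and> y \<le> s + d"
proof -
  define k where "k = nat \<lfloor>(y - a) / d\<rfloor>"
  define m where "m = min N k"
  have k1: "real k \<le> (y - a) / d" unfolding k_def using ay d
    by (simp add: divide_nonneg_pos)
  have k2: "(y - a) / d < real k + 1"
  proof -
    have "0 \<le> (y - a) / d" using ay d by simp
    then have "real k = of_int \<lfloor>(y - a) / d\<rfloor>" unfolding k_def by (simp add: of_nat_nat)
    then show ?thesis by linarith
  qed
  have iff: "a + real i * d \<le> y \<longleftrightarrow> i \<le> k" for i
  proof
    assume "a + real i * d \<le> y"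
    then have "real i \<le> (y - a) / d" using d by (simp add: field_simps)
    then have "real i < real k + 1" using k2 by linarith
    then show "i \<le> k" by linarith
  next
    assume "i \<le> k"
    then have "real i \<le> (y - a) / d" using k1 by linarith
    then show "a + real i * d \<le> y" using d by (simp add: field_simps)
  qed
  have "(\<Sum>i\<in>{1..N}. if a + real i * d \<le> y then 1 else 0 :: real) = (\<Sum>i\<in>{1..N}. if i \<le> m then 1 else 0)"
    by (intro sum.cong) (auto simp: iff m_def)
  also have "\<dots> = (\<Sum>i\<in>{1..m}. 1)"
    by (rule sum.mono_neutral_cong_right) (auto simp: m_def)
  also have "\<dots> = real m" by simp
  finally have s: "s = a + d * real m" by (simp add: s_def)
  have "real m \<le> (y - a) / d" using k1 by (simp add: m_def)
  then have 1: "s \<le> y" using d by (simp add: s field_simps)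
  have "y \<le> s + d"
  proof (cases "k \<le> N")
    case True
    then have "m = k" by (simp add: m_def)
    then have "(y - a) / d < real m + 1" using k2 by simp
    then show ?thesis using d by (simp add: s field_simps)
  next
    case False
    then have "m = N" by (simp add: m_def)
    then show ?thesis using yb d by (simp add: s algebra_simps)
  qed
  with 1 show ?thesis by simp
qed

lemma integral_diff_le_tv:
  assumes P: "prob_space P" and Q: "prob_space Q" and sets_eq: "sets P = sets Q"
    and f[measurable]: "f \<in> borel_measurable P" and bnd: "\<And>x. a \<le> f x \<and> f x \<le> b"
  shows "(\<integral>x. f x \<partial>P) - (\<integral>x. f x \<partial>Q) \<le> (b - a) * tv_dist P Q"
proof (rule field_le_epsilon)
  interpret P: prob_space P by fact
  interpret Q: prob_space Q by fact
  fix e :: real assume e: "e > 0"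
  have fQ[measurable]: "f \<in> borel_measurable Q" using f measurable_cong_sets[OF sets_eq refl] by blast
  obtain N :: nat where N: "N \<ge> 1" "(b - a) / real N < e"
  proof -
    obtain N0 :: nat where "real N0 > (b - a) / e" using reals_Archimedean2 by blast
    then have "(b - a) < e * real (Suc N0)" using e by (simp add: field_simps)
    then have "(b - a) / real (Suc N0) < e" by (simp add: field_simps)
    then show ?thesis by (intro that[of "Suc N0"]) auto
  qed
  have ab: "a \<le> b" using bnd[of undefined] by linarith
  show "(\<integral>x. f x \<partial>P) - (\<integral>x. f x \<partial>Q) \<le> (b - a) * tv_dist P Q + e"
  proof (cases "a = b")
    case True
    then have "f = (\<lambda>x. a)" using bnd by (intro ext) (metis order_antisym)
    then show ?thesis using e tv_nonneg[OF P Q] True by (simp add: P.prob_space Q.prob_space)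
  next
    case False
    then have ab': "a < b" using ab by simp
    define d where "d = (b - a) / real N"
    have d: "d > 0" using ab' N by (simp add: d_def)
    have Nd: "a + real N * d = b" using N by (simp add: d_def)
    define A where "A i = {x \<in> space P. a + real i * d \<le> f x}" for i :: nat
    have A[measurable]: "A i \<in> sets P" for i unfolding A_def by measurable
    have AQ: "A i \<in> sets Q" for i using A sets_eq by simp
    define s where "s x = a + d * (\<Sum>i\<in>{1..N}. indicator (A i) x)" for x
    have sx: "x \<in> space P \<Longrightarrow> s x \<le> f x \<and> f x \<le> s x + d" for x
    proof -
      assume x: "x \<in> space P"
      have "(\<Sum>i\<in>{1..N}. indicator (A i) x) = (\<Sum>i\<in>{1..N}. if a + real i * d \<le> f x then 1 else 0 :: real)"
        by (intro sum.cong) (auto simp: A_def x)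
      then show ?thesis using step_approx[OF d, where a=a and y="f x" and N=N] bnd[of x] Nd by (simp add: s_def)
    qed
    have sP: "integrable P s" "integrable Q s"
      unfolding s_def using A AQ
      by (auto intro!: Bochner_Integration.integrable_add integrable_mult_right integrable_sum
          simp: P.emeasure_finite Q.emeasure_finite less_top[symmetric])
    have fint: "integrable P f" "integrable Q f"
      by (auto intro!: P.integrable_const_bound[where B="\<bar>a\<bar> + \<bar>b\<bar>"] Q.integrable_const_bound[where B="\<bar>a\<bar> + \<bar>b\<bar>"] AE_I2
          simp: abs_le_iff) (use bnd in \<open>smt (verit)\<close>)+
    have "(\<integral>x. f x \<partial>P) \<le> (\<integral>x. s x + d \<partial>P)"
      by (rule integral_mono) (use sP fint sx in auto)
    also have "\<dots> = (\<integral>x. s x \<partial>P) + d" using sP by (simp add: P.prob_space)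
    finally have 1: "(\<integral>x. f x \<partial>P) \<le> (\<integral>x. s x \<partial>P) + d" .
    have "(\<integral>x. s x \<partial>Q) \<le> (\<integral>x. f x \<partial>Q)"
      by (rule integral_mono) (use sP fint sx sets_eq_imp_space_eq[OF sets_eq] in auto)
    have int_s: "(\<integral>x. s x \<partial>M) = a + d * (\<Sum>i\<in>{1..N}. measure M (A i))"
      if "prob_space M" "\<And>i. A i \<in> sets M" for M
    proof -
      interpret M: prob_space M by fact
      show ?thesis unfolding s_def
        using that(2) by (subst Bochner_Integration.integral_add)
          (auto simp: M.prob_space M.emeasure_finite less_top[symmetric] intro!: integrable_sum integrable_mult_right)
    qed
    have "(\<integral>x. s x \<partial>P) - (\<integral>x. s x \<partial>Q) = d * (\<Sum>i\<in>{1..N}. measure P (A i) - measure Q (A i))"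
      using int_s[OF P A] int_s[OF Q AQ] by (simp add: sum_subtractf algebra_simps)
    also have "\<dots> \<le> d * (\<Sum>i\<in>{1..N}. tv_dist P Q)"
      using d by (intro mult_left_mono sum_mono tv_upper[OF P Q A]) auto
    also have "\<dots> = (b - a) * tv_dist P Q" using N by (simp add: d_def)
    finally have 2: "(\<integral>x. s x \<partial>P) - (\<integral>x. s x \<partial>Q) \<le> (b - a) * tv_dist P Q" .
    have "d < e" using N by (simp add: d_def)
    with 1 2 \<open>(\<integral>x. s x \<partial>Q) \<le> (\<integral>x. f x \<partial>Q)\<close> show ?thesis by linarith
  qed
qed

lemma abs_integral_diff_le_tv:
  assumes P: "prob_space P" and Q: "prob_space Q" and sets_eq: "sets P = sets Q"
    and f[measurable]: "f \<in> borel_measurable P" and bnd: "\<And>x. a \<le> f x \<and> f x \<le> b"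
  shows "\<bar>(\<integral>x. f x \<partial>P) - (\<integral>x. f x \<partial>Q)\<bar> \<le> (b - a) * tv_dist P Q"
proof -
  have ab: "a \<le> b" using bnd[of undefined] by linarith
  have 1: "(\<integral>x. f x \<partial>P) - (\<integral>x. f x \<partial>Q) \<le> (b - a) * tv_dist P Q"
    by (rule integral_diff_le_tv[OF P Q sets_eq f bnd])
  have fQ: "f \<in> borel_measurable Q" using f measurable_cong_sets[OF sets_eq refl] by blast
  have "(\<integral>x. f x \<partial>Q) - (\<integral>x. f x \<partial>P) \<le> (b - a) * tv_dist Q P"
    by (rule integral_diff_le_tv[OF Q P sets_eq[symmetric] fQ bnd])
  also have "\<dots> \<le> (b - a) * tv_dist P Q"
    using ab by (intro mult_left_mono tv_sym[OF P Q sets_eq]) auto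
  finally show ?thesis using 1 by linarith
qed

definition cfam :: "'a set set \<Rightarrow> 'a set set" where
  "cfam BB = (\<lambda>F. \<Union>F) ` {F. finite F \<and> F \<subseteq> BB}"

lemma countable_cfam: "countable BB \<Longrightarrow> countable (cfam BB)"
  unfolding cfam_def by (intro countable_image countable_Collect_finite_subset)

lemma empty_in_cfam: "{} \<in> cfam BB"
  unfolding cfam_def by (rule image_eqI[where x="{}"]) auto

lemma cfam_open: "topological_basis BB \<Longrightarrow> B \<in> cfam BB \<Longrightarrow> open B"
  unfolding cfam_def topological_basis_def by (auto intro!: open_Union)

lemma outer_approx:
  fixes M :: "'a::polish_space measure"
  assumes fin: "finite_measure M" and sb: "sets M = sets borel" and U: "U \<in> sets borel" and e: "e > 0"
  shows "\<exists>V. open V \<and> U \<subseteq> V \<and> measure M (V - U) < e"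
proof -
  interpret finite_measure M by fact
  have "emeasure M U = (INF V \<in> {V. U \<subseteq> V \<and> open V}. emeasure M V)"
    by (rule outer_regular[OF sb]) (use U in auto)
  moreover have "emeasure M U < emeasure M U + ennreal e"
  proof -
    have "ennreal (measure M U) < ennreal (measure M U + e)"
      using e measure_nonneg[of M U] by (intro ennreal_lessI) linarith+
    then show ?thesis using e by (simp add: emeasure_eq_measure ennreal_plus)
  qed
  ultimately have "(INF V \<in> {V. U \<subseteq> V \<and> open V}. emeasure M V) < emeasure M U + ennreal e" by simp
  then obtain V where V: "U \<subseteq> V" "open V" "emeasure M V < emeasure M U + ennreal e"
    by (auto simp: INF_less_iff)
  have OM: "V \<in> sets M" and UM: "U \<in> sets M" using V U sb by auto
  have "ennreal (measure M V) < ennreal (measure M U + e)"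
    using V(3) e by (simp add: emeasure_eq_measure ennreal_plus[symmetric] del: ennreal_plus)
  then have "measure M V < measure M U + e" by (simp add: ennreal_less_iff)
  then have "measure M (V - U) < e" using finite_measure_Diff[OF OM UM] V(1) by simp
  with V show ?thesis by blast
qed

lemma inner_approx_open:
  fixes M :: "'a::topological_space measure"
  assumes fin: "finite_measure M" and sb: "sets M = sets borel"
    and BB: "topological_basis BB" "countable BB" and V: "open V" "V \<noteq> {}"
  obtains D where "\<And>k. D k \<in> cfam BB" "\<And>k. D k \<subseteq> V"
    "\<And>M. finite_measure M \<Longrightarrow> sets M = sets borel \<Longrightarrow> (\<lambda>k. measure M (V - D k)) \<longlonglongrightarrow> 0"
proof -
  define S where "S = {b \<in> BB. b \<subseteq> V}"
  have US: "\<Union>S = V"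
  proof -
    obtain B' where "B' \<subseteq> BB" "\<Union>B' = V" using BB(1) V(1) unfolding topological_basis_def by blast
    then show ?thesis unfolding S_def by blast
  qed
  have Sne: "S \<noteq> {}" using US V(2) by auto
  have Sc: "countable S" using BB(2) unfolding S_def by simp
  define D where "D k = \<Union>(from_nat_into S ` {..<k})" for k
  have DS: "from_nat_into S i \<in> S" for i using from_nat_into[OF Sne] .
  have Dc: "D k \<in> cfam BB" for k
    unfolding cfam_def D_def using DS by (intro image_eqI[where x="from_nat_into S ` {..<k}"]) (auto simp: S_def)
  have DO: "D k \<subseteq> V" for k unfolding D_def using DS by (auto simp: S_def)
  have inc: "incseq D" unfolding D_def incseq_def by (auto 4 3 intro: less_le_trans)
  have UD: "(\<Union>k. D k) = V"
  proof
    show "(\<Union>k. D k) \<subseteq> V" using DO by auto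
    show "V \<subseteq> (\<Union>k. D k)"
    proof
      fix x assume "x \<in> V"
      then obtain b where b: "b \<in> S" "x \<in> b" using US by auto
      then obtain i where "from_nat_into S i = b" using from_nat_into_surj[OF Sc] by blast
      then have "x \<in> D (Suc i)" unfolding D_def using b by auto
      then show "x \<in> (\<Union>k. D k)" by blast
    qed
  qed
  have lim: "(\<lambda>k. measure M (V - D k)) \<longlonglongrightarrow> 0" if "finite_measure M" "sets M = sets borel" for M
  proof -
    interpret finite_measure M by fact
    have Dm: "range D \<subseteq> sets M" using Dc cfam_open[OF BB(1)] that(2) by auto
    have Om: "V \<in> sets M" using V that(2) by auto
    have "(\<lambda>k. measure M (D k)) \<longlonglongrightarrow> measure M V"
      using finite_Lim_measure_incseq[OF Dm inc] UD by simp
    then have "(\<lambda>k. measure M V - measure M (D k)) \<longlonglongrightarrow> measure M V - measure M V"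
      by (intro tendsto_diff tendsto_const)
    moreover have "measure M (V - D k) = measure M V - measure M (D k)" for k
      using finite_measure_Diff[OF Om, of "D k"] Dm DO by auto
    ultimately show ?thesis by simp
  qed
  show ?thesis using that Dc DO lim by blast
qed

lemma approx_cfam:
  fixes P Q :: "'a::polish_space measure"
  assumes P: "finite_measure P" "sets P = sets borel" and Q: "finite_measure Q" "sets Q = sets borel"
    and BB: "topological_basis BB" "countable BB"
    and U: "U \<in> sets borel" and e: "e > 0"
  shows "\<exists>B\<in>cfam BB. measure P ((U - B) \<union> (B - U)) < e \<and> measure Q ((U - B) \<union> (B - U)) < e"
proof -
  interpret P: finite_measure P by fact
  interpret Q: finite_measure Q by fact
  obtain V1 where V1: "open V1" "U \<subseteq> V1" "measure P (V1 - U) < e/2"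
    using outer_approx[OF P U, of "e/2"] e by auto
  obtain V2 where V2: "open V2" "U \<subseteq> V2" "measure Q (V2 - U) < e/2"
    using outer_approx[OF Q U, of "e/2"] e by auto
  define V where "V = V1 \<inter> V2"
  have V: "open V" "U \<subseteq> V" using V1 V2 by (auto simp: V_def)
  have UP: "U \<in> sets P" "U \<in> sets Q" using U P Q by auto
  have OP: "V \<in> sets P" "V \<in> sets Q" "V1 \<in> sets P" "V2 \<in> sets Q" using V V1 V2 P Q by auto
  have "measure P (V - U) \<le> measure P (V1 - U)"
    by (rule P.finite_measure_mono) (use OP UP in \<open>auto simp: V_def\<close>)
  then have mP: "measure P (V - U) < e/2" using V1(3) by linarith
  have "measure Q (V - U) \<le> measure Q (V2 - U)"
    by (rule Q.finite_measure_mono) (use OP UP in \<open>auto simp: V_def\<close>)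
  then have mQ: "measure Q (V - U) < e/2" using V2(3) by linarith
  show ?thesis
  proof (cases "V = {}")
    case True
    then have "U = {}" using V by auto
    then show ?thesis using empty_in_cfam[of BB] e by force
  next
    case False
    obtain D where D: "\<And>k. D k \<in> cfam BB" "\<And>k. D k \<subseteq> V"
      "\<And>M. finite_measure M \<Longrightarrow> sets M = sets borel \<Longrightarrow> (\<lambda>k. measure M (V - D k)) \<longlonglongrightarrow> 0"
      using inner_approx_open[OF P BB V(1) False] by blast
    have "eventually (\<lambda>k. measure P (V - D k) < e/2) sequentially"
      using D(3)[OF P] e by (intro order_tendstoD) auto
    moreover have "eventually (\<lambda>k. measure Q (V - D k) < e/2) sequentially"
      using D(3)[OF Q] e by (intro order_tendstoD) auto
    ultimately obtain k where k: "measure P (V - D k) < e/2" "measure Q (V - D k) < e/2"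
      by (metis (mono_tags, lifting) eventually_conj_iff eventually_sequentially order.refl)
    have Dm: "D k \<in> sets borel" using cfam_open[OF BB(1) D(1)] by auto
    have sub: "(U - D k) \<union> (D k - U) \<subseteq> (V - U) \<union> (V - D k)" using V D(2)[of k] by auto
    have "measure P ((U - D k) \<union> (D k - U)) \<le> measure P ((V - U) \<union> (V - D k))"
      by (rule P.finite_measure_mono[OF sub]) (use OP UP Dm P in auto)
    also have "\<dots> \<le> measure P (V - U) + measure P (V - D k)"
      by (rule measure_Un_le) (use OP UP Dm P in auto)
    finally have 1: "measure P ((U - D k) \<union> (D k - U)) < e" using mP k by linarith
    have "measure Q ((U - D k) \<union> (D k - U)) \<le> measure Q ((V - U) \<union> (V - D k))"
      by (rule Q.finite_measure_mono[OF sub]) (use OP UP Dm Q in auto)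
    also have "\<dots> \<le> measure Q (V - U) + measure Q (V - D k)"
      by (rule measure_Un_le) (use OP UP Dm Q in auto)
    finally have 2: "measure Q ((U - D k) \<union> (D k - U)) < e" using mQ k by linarith
    show ?thesis using 1 2 D(1) by blast
  qed
qed

lemma cfam_bdd:
  assumes "prob_space P" "prob_space Q"
  shows "bdd_above ((\<lambda>B. measure P B - measure Q B) ` X)"
proof -
  interpret P: prob_space P by fact
  interpret Q: prob_space Q by fact
  have "measure P A - measure Q A \<le> 1" for A using P.prob_le_1[of A] measure_nonneg[of Q A] by linarith
  then show ?thesis by (intro bdd_aboveI[where M=1]) auto
qed

lemma tv_cfam:
  fixes P Q :: "'a::polish_space measure"
  assumes P: "prob_space P" "sets P = sets borel" and Q: "prob_space Q" "sets Q = sets borel"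
    and BB: "topological_basis BB" "countable BB"
  shows "tv_dist P Q = (SUP B\<in>cfam BB. measure P B - measure Q B)"
proof (rule antisym)
  interpret P: prob_space P by fact
  interpret Q: prob_space Q by fact
  have ne: "cfam BB \<noteq> {}" using empty_in_cfam by blast
  have cP: "B \<in> cfam BB \<Longrightarrow> B \<in> sets P" for B using cfam_open[OF BB(1)] P(2) by auto
  show "tv_dist P Q \<le> (SUP B\<in>cfam BB. measure P B - measure Q B)"
    unfolding tv_dist_def
  proof (rule cSUP_least)
    show "sets P \<noteq> {}" by auto
    fix A assume A: "A \<in> sets P"
    show "measure P A - measure Q A \<le> (SUP B\<in>cfam BB. measure P B - measure Q B)"
    proof (rule field_le_epsilon)
      fix e :: real assume e: "e > 0"
      have fP: "finite_measure P" and fQ: "finite_measure Q" by unfold_locales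
      have Ab: "A \<in> sets borel" using A P(2) by simp
      obtain B where B: "B \<in> cfam BB" "measure P ((A - B) \<union> (B - A)) < e/2"
        "measure Q ((A - B) \<union> (B - A)) < e/2"
        using approx_cfam[OF fP P(2) fQ Q(2) BB Ab, of "e/2"] e by auto
      have BP: "B \<in> sets P" "B \<in> sets Q" using cP[OF B(1)] P(2) Q(2) by auto
      have AQ: "A \<in> sets Q" using A P(2) Q(2) by simp
      have "measure P A \<le> measure P (B \<union> ((A - B) \<union> (B - A)))"
        by (rule P.finite_measure_mono) (use A BP in auto)
      also have "\<dots> \<le> measure P B + measure P ((A - B) \<union> (B - A))"
        by (rule measure_Un_le) (use A BP in auto)
      finally have 1: "measure P A \<le> measure P B + e/2" using B(2) by linarith
      have "measure Q B \<le> measure Q (A \<union> ((A - B) \<union> (B - A)))"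
        by (rule Q.finite_measure_mono) (use AQ BP in auto)
      also have "\<dots> \<le> measure Q A + measure Q ((A - B) \<union> (B - A))"
        by (rule measure_Un_le) (use AQ BP in auto)
      finally have 2: "measure Q B \<le> measure Q A + e/2" using B(3) by linarith
      have "measure P B - measure Q B \<le> (SUP B\<in>cfam BB. measure P B - measure Q B)"
        by (rule cSUP_upper[OF B(1) cfam_bdd[OF P(1) Q(1)]])
      with 1 2 show "measure P A - measure Q A \<le> (SUP B\<in>cfam BB. measure P B - measure Q B) + e"
        by linarith
    qed
  qed
  show "(SUP B\<in>cfam BB. measure P B - measure Q B) \<le> tv_dist P Q"
    by (rule cSUP_least[OF ne]) (use cP tv_upper[OF P(1) Q(1)] in auto)
qed

lemma kernel_prob:
  assumes K: "K \<in> M \<rightarrow>\<^sub>M prob_algebra N" and x: "x \<in> space M"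
  shows "prob_space (K x)" "sets (K x) = sets N"
  using measurable_space[OF K x] by (auto simp: space_prob_algebra)

lemma measurable_tv:
  fixes K L :: "'b \<Rightarrow> 'a::polish_space measure"
  assumes K: "K \<in> M \<rightarrow>\<^sub>M prob_algebra borel" and L: "L \<in> M \<rightarrow>\<^sub>M prob_algebra borel"
  shows "(\<lambda>x. tv_dist (K x) (L x)) \<in> borel_measurable M"
proof -
  obtain BB :: "'a set set" where BB: "countable BB" "topological_basis BB"
    using ex_countable_basis by blast
  have Ks[measurable]: "K \<in> M \<rightarrow>\<^sub>M subprob_algebra borel" using K by (rule measurable_prob_algebraD)
  have Ls[measurable]: "L \<in> M \<rightarrow>\<^sub>M subprob_algebra borel" using L by (rule measurable_prob_algebraD)
  have "(\<lambda>x. SUP B\<in>cfam BB. measure (K x) B - measure (L x) B) \<in> borel_measurable M"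
  proof (rule borel_measurable_cSUP)
    show "countable (cfam BB)" by (rule countable_cfam[OF BB(1)])
    fix B assume "B \<in> cfam BB"
    then have B: "B \<in> sets borel" using cfam_open[OF BB(2)] by auto
    show "(\<lambda>x. measure (K x) B - measure (L x) B) \<in> borel_measurable M"
      using B by measurable
  next
    fix x assume "x \<in> space M"
    then show "bdd_above ((\<lambda>B. measure (K x) B - measure (L x) B) ` cfam BB)"
      using kernel_prob[OF K] kernel_prob[OF L] by (intro cfam_bdd) auto
  qed
  then show ?thesis
    by (rule measurable_cong[THEN iffD1, rotated])
       (use kernel_prob[OF K] kernel_prob[OF L] in \<open>metis tv_cfam BB\<close>)
qed

lemma DV_indicator:
  assumes P: "prob_space P" and Q: "prob_space Q" and sets_eq: "sets P = sets Q" and A: "A \<in> sets P"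
  shows "DV P Q (\<lambda>x. t * indicator A x) = t * measure P A - ln (1 - measure Q A + measure Q A * exp t)"
proof -
  interpret P: prob_space P by fact
  interpret Q: prob_space Q by fact
  have AQ: "A \<in> sets Q" using A sets_eq by simp
  have e1: "(\<integral>x. t * indicator A x \<partial>P) = t * measure P A"
  proof -
    have "A \<inter> space P = A" using A sets.sets_into_space by blast
    then show ?thesis using A by simp
  qed
  have "(\<lambda>x. exp (t * indicator A x)) = (\<lambda>x. 1 + (exp t - 1) * indicator A x)"
    by (auto simp: indicator_def)
  then have "(\<integral>x. exp (t * indicator A x) \<partial>Q) = (\<integral>x. 1 + (exp t - 1) * indicator A x \<partial>Q)"
    by simp
  also have "\<dots> = 1 + (exp t - 1) * measure Q A"
  proof -
    have "A \<inter> space Q = A" using AQ sets.sets_into_space by blast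
    then show ?thesis
      using AQ by (subst Bochner_Integration.integral_add) (auto simp: Q.prob_space Q.emeasure_finite less_top[symmetric])
  qed
  finally have e2: "(\<integral>x. exp (t * indicator A x) \<partial>Q) = 1 - measure Q A + measure Q A * exp t"
    by (simp add: algebra_simps)
  show ?thesis unfolding DV_def e1 e2 ..
qed

lemma exp_lip:
  fixes x y M :: real
  assumes "x \<le> M" "y \<le> M"
  shows "\<bar>exp x - exp y\<bar> \<le> exp M * \<bar>x - y\<bar>"
proof -
  have *: "exp u - exp v \<le> exp M * (u - v)" if "v \<le> u" "u \<le> M" for u v :: real
  proof -
    have "1 - (u - v) \<le> exp (v - u)" using exp_ge_add_one_self[of "v - u"] by linarith
    then have "exp u * (1 - (u - v)) \<le> exp u * exp (v - u)" by (intro mult_left_mono) auto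
    then have "exp u - exp v \<le> exp u * (u - v)" by (simp add: exp_diff algebra_simps mult_exp_exp[symmetric])
    also have "\<dots> \<le> exp M * (u - v)" using that by (intro mult_right_mono) auto
    finally show ?thesis .
  qed
  show ?thesis
  proof (cases "y \<le> x")
    case True then show ?thesis using *[of y x] assms by (simp add: abs_of_nonneg)
  next
    case False then show ?thesis using *[of x y] assms by (simp add: abs_of_nonpos abs_minus_commute)
  qed
qed

lemma DV_lip:
  assumes P: "prob_space P" and Q: "prob_space Q" and sets_eq: "sets P = sets Q"
    and g1[measurable]: "g1 \<in> borel_measurable Q" and g2[measurable]: "g2 \<in> borel_measurable Q"
    and b1: "\<And>x. \<bar>g1 x\<bar> \<le> M" and b2: "\<And>x. \<bar>g2 x\<bar> \<le> M"
  shows "DV P Q g1 - DV P Q g2 \<le> (\<integral>x. \<bar>g1 x - g2 x\<bar> \<partial>P) + exp (2 * M) * (\<integral>x. \<bar>g1 x - g2 x\<bar> \<partial>Q)"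
proof -
  interpret P: prob_space P by fact
  interpret Q: prob_space Q by fact
  have g1P[measurable]: "g1 \<in> borel_measurable P" using g1 measurable_cong_sets[OF sets_eq refl] by blast
  have g2P[measurable]: "g2 \<in> borel_measurable P" using g2 measurable_cong_sets[OF sets_eq refl] by blast
  have bb: "g1 x \<le> M" "- M \<le> g1 x" "g2 x \<le> M" "- M \<le> g2 x" for x using b1[of x] b2[of x] by auto
  have i1P: "integrable P g1" and i2P: "integrable P g2"
    by (auto intro!: P.integrable_const_bound[where B=M] AE_I2 b1 b2)
  have i1Q: "integrable Q (\<lambda>x. exp (g1 x))" and i2Q: "integrable Q (\<lambda>x. exp (g2 x))"
    by (auto intro!: Q.integrable_const_bound[where B="exp M"] AE_I2 simp: bb)
  have idP: "integrable P (\<lambda>x. \<bar>g1 x - g2 x\<bar>)" using i1P i2P by auto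
  have idQ: "integrable Q (\<lambda>x. \<bar>g1 x - g2 x\<bar>)"
    by (auto intro!: Q.integrable_const_bound[where B="2*M"] AE_I2) (smt (verit) b1 b2)
  define E1 where "E1 = (\<integral>x. exp (g1 x) \<partial>Q)"
  define E2 where "E2 = (\<integral>x. exp (g2 x) \<partial>Q)"
  have "(\<integral>x. exp (- M) \<partial>Q) \<le> E2" unfolding E2_def
    by (rule integral_mono[OF _ i2Q]) (auto simp: bb)
  then have E2ge: "exp (- M) \<le> E2" by (simp add: Q.prob_space)
  then have E2pos: "E2 > 0" using exp_gt_zero[of "-M"] by linarith
  have "(\<integral>x. exp (- M) \<partial>Q) \<le> E1" unfolding E1_def
    by (rule integral_mono[OF _ i1Q]) (auto simp: bb)
  then have "exp (- M) \<le> E1" by (simp add: Q.prob_space)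
  then have E1pos: "E1 > 0" using exp_gt_zero[of "-M"] by linarith
  have a: "(\<integral>x. g1 x \<partial>P) - (\<integral>x. g2 x \<partial>P) \<le> (\<integral>x. \<bar>g1 x - g2 x\<bar> \<partial>P)"
  proof -
    have "(\<integral>x. g1 x \<partial>P) - (\<integral>x. g2 x \<partial>P) = (\<integral>x. g1 x - g2 x \<partial>P)" using i1P i2P by simp
    also have "\<dots> \<le> (\<integral>x. \<bar>g1 x - g2 x\<bar> \<partial>P)" by (rule integral_mono) (use i1P i2P idP in auto)
    finally show ?thesis .
  qed
  have E12: "E2 - E1 \<le> exp M * (\<integral>x. \<bar>g1 x - g2 x\<bar> \<partial>Q)"
  proof -
    have "E2 - E1 = (\<integral>x. exp (g2 x) - exp (g1 x) \<partial>Q)" using i1Q i2Q by (simp add: E1_def E2_def)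
    also have "\<dots> \<le> (\<integral>x. exp M * \<bar>g1 x - g2 x\<bar> \<partial>Q)"
    proof (rule integral_mono)
      show "integrable Q (\<lambda>x. exp M * \<bar>g1 x - g2 x\<bar>)" using idQ by simp
      show "integrable Q (\<lambda>x. exp (g2 x) - exp (g1 x))" using i1Q i2Q by simp
      fix x show "exp (g2 x) - exp (g1 x) \<le> exp M * \<bar>g1 x - g2 x\<bar>"
        using exp_lip[OF bb(3) bb(1), of x x] by (simp add: abs_minus_commute)
    qed
    also have "\<dots> = exp M * (\<integral>x. \<bar>g1 x - g2 x\<bar> \<partial>Q)" by simp
    finally show ?thesis .
  qed
  have "ln E2 - ln E1 = ln (E2 / E1)" using E1pos E2pos by (simp add: ln_div)
  also have "\<dots> \<le> E2 / E1 - 1" using E1pos E2pos by (intro ln_le_minus_one) auto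
  also have "\<dots> = (E2 - E1) / E1" using E1pos by (simp add: field_simps)
  also have "\<dots> \<le> exp M * max 0 (E2 - E1)"
  proof -
    have "1 / E1 \<le> exp M" using \<open>exp (- M) \<le> E1\<close> E1pos
      by (metis exp_minus inverse_eq_divide le_imp_inverse_le exp_gt_zero inverse_inverse_eq)
    then have "max 0 (E2 - E1) / E1 \<le> exp M * max 0 (E2 - E1)"
      by (metis (no_types, opaque_lifting) divide_inverse_commute inverse_eq_divide max.cobounded1 mult_right_mono mult.commute)
    moreover have "(E2 - E1) / E1 \<le> max 0 (E2 - E1) / E1" using E1pos by (intro divide_right_mono) auto
    ultimately show ?thesis by linarith
  qed
  also have "\<dots> \<le> exp M * (exp M * (\<integral>x. \<bar>g1 x - g2 x\<bar> \<partial>Q))"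
  proof -
    have "0 \<le> (\<integral>x. \<bar>g1 x - g2 x\<bar> \<partial>Q)" by simp
    then have "max 0 (E2 - E1) \<le> exp M * (\<integral>x. \<bar>g1 x - g2 x\<bar> \<partial>Q)" using E12 by simp
    then show ?thesis by (intro mult_left_mono) auto
  qed
  also have "\<dots> = exp (2 * M) * (\<integral>x. \<bar>g1 x - g2 x\<bar> \<partial>Q)"
  proof -
    have "exp M * exp M = exp (2 * M)" by (simp add: mult_exp_exp)
    then show ?thesis by (simp add: mult.assoc[symmetric])
  qed
  finally have b: "ln E2 - ln E1 \<le> exp (2 * M) * (\<integral>x. \<bar>g1 x - g2 x\<bar> \<partial>Q)" .
  show ?thesis using a b unfolding DV_def E1_def[symmetric] E2_def[symmetric] by linarith
qed

lemma neg_xlnx_le: "0 < y \<Longrightarrow> y * max 0 (- ln y) \<le> (1::real)"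
proof -
  assume y: "0 < y"
  show ?thesis
  proof (cases "y \<ge> 1")
    case True then show ?thesis by simp
  next
    case False
    have "ln (1 / y) \<le> 1 / y - 1" using y by (intro ln_le_minus_one) auto
    then have "- ln y \<le> 1 / y - 1" using y by (simp add: ln_div)
    then have "y * (- ln y) \<le> y * (1 / y - 1)" using y by (intro mult_left_mono) auto
    also have "\<dots> = 1 - y" using y by (simp add: field_simps)
    finally show ?thesis using y False by (simp add: max_def)
  qed
qed

lemma KL_approx_bounded:
  assumes P: "prob_space P" and Q: "prob_space Q" and sets_eq: "sets P = sets Q"
    and c: "ereal c < rel_entropy P Q"
  shows "\<exists>g B. g \<in> borel_measurable Q \<and> (\<forall>x. \<bar>g x\<bar> \<le> B) \<and> c < DV P Q g"
proof -
  interpret P: prob_space P by fact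
  interpret Q: prob_space Q by fact
  show ?thesis
  proof (cases "absolutely_continuous Q P")
    case False
    then obtain A where A: "A \<in> null_sets Q" "A \<notin> null_sets P"
      unfolding absolutely_continuous_def by blast
    have AQ: "A \<in> sets Q" and AP: "A \<in> sets P" using A(1) sets_eq by auto
    have qA: "measure Q A = 0" using A(1) by (auto simp: null_sets_def measure_def)
    have "emeasure P A \<noteq> 0" using A AP by auto
    then have pA: "measure P A > 0" using P.emeasure_eq_measure by (simp add: zero_less_measure_iff)
    define t where "t = (\<bar>c\<bar> + 1) / measure P A"
    have "DV P Q (\<lambda>x. t * indicator A x) = t * measure P A"
      using DV_indicator[OF P Q sets_eq AP, of t] qA by simp
    also have "\<dots> = \<bar>c\<bar> + 1" using pA by (simp add: t_def)
    finally have "c < DV P Q (\<lambda>x. t * indicator A x)" by linarith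
    moreover have "(\<lambda>x. t * indicator A x) \<in> borel_measurable Q" using AQ by measurable
    moreover have "\<forall>x. \<bar>t * indicator A x\<bar> \<le> \<bar>t\<bar>" by (auto simp: indicator_def)
    ultimately show ?thesis by blast
  next
    case ac: True
    define f where "f = RN_deriv Q P"
    define h where "h = (\<lambda>x. ln (enn2real (f x)))"
    have fm[measurable]: "f \<in> borel_measurable Q" by (simp add: f_def)
    have fmP[measurable]: "f \<in> borel_measurable P" using fm measurable_cong_sets[OF sets_eq refl] by blast
    have hm[measurable]: "h \<in> borel_measurable P" unfolding h_def by measurable
    have dens: "density Q f = P" unfolding f_def by (rule Q.density_RN_deriv[OF ac sets_eq])
    have fin: "AE x in Q. f x \<noteq> \<infinity>" unfolding f_def
      by (rule Q.RN_deriv_finite[OF _ ac sets_eq]) (rule P.sigma_finite_measure_axioms)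
    have finP: "AE x in P. f x \<noteq> \<infinity>" by (rule absolutely_continuous_AE[OF sets_eq ac fin])
    have posP: "AE x in P. f x \<noteq> 0" unfolding dens[symmetric]
      by (subst AE_density) auto
    have f_int: "integrable Q (\<lambda>x. enn2real (f x))" and f_one: "(\<integral>x. enn2real (f x) \<partial>Q) = 1"
    proof -
      have "(\<integral>\<^sup>+x. ennreal (enn2real (f x)) \<partial>Q) = (\<integral>\<^sup>+x. f x * 1 \<partial>Q)"
        by (rule nn_integral_cong_AE) (use fin in \<open>auto simp: less_top\<close>)
      also have "\<dots> = (\<integral>\<^sup>+x. 1 \<partial>density Q f)" by (rule nn_integral_density[symmetric]) auto
      also have "\<dots> = 1" unfolding dens by (simp add: P.emeasure_space_1)
      finally have nn: "(\<integral>\<^sup>+x. ennreal (enn2real (f x)) \<partial>Q) = 1" .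
      show "integrable Q (\<lambda>x. enn2real (f x))"
        by (rule integrableI_nonneg) (use nn in auto)
      then show "(\<integral>x. enn2real (f x) \<partial>Q) = 1"
        using nn by (subst (asm) nn_integral_eq_integral) auto
    qed
    have bound_exp: "(\<integral>x. exp (g x) \<partial>Q) \<le> 1 + exp L"
      if gm: "g \<in> borel_measurable Q" and gb: "\<And>x. \<bar>g x\<bar> \<le> B"
        and gp: "\<And>x. exp (g x) \<le> enn2real (f x) + exp L" for g L B
    proof -
      have "(\<integral>x. exp (g x) \<partial>Q) \<le> (\<integral>x. enn2real (f x) + exp L \<partial>Q)"
      proof (rule integral_mono)
        show "integrable Q (\<lambda>x. exp (g x))"
          by (rule Q.integrable_const_bound[where B="exp B"]) (use gm gb in \<open>auto intro!: AE_I2 simp: abs_le_iff\<close>)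
        show "integrable Q (\<lambda>x. enn2real (f x) + exp L)" using f_int by simp
      qed (rule gp)
      also have "\<dots> = 1 + exp L" using f_int f_one by (simp add: Q.prob_space)
      finally show ?thesis .
    qed
    show ?thesis
    proof (cases "integrable P h")
      case hint: True
      have re: "rel_entropy P Q = ereal (\<integral>x. h x \<partial>P)"
        using ac hint by (simp add: rel_entropy_def h_def f_def)
      define g where "g M x = (if f x = 0 \<or> f x = \<infinity> then - real M else max (- real M) (min (real M) (h x)))" for M :: nat and x
      have gm[measurable]: "g M \<in> borel_measurable Q" for M
      proof -
        have "h \<in> borel_measurable Q" using hm measurable_cong_sets[OF sets_eq refl] by blast
        then show ?thesis unfolding g_def by measurable
      qed
      have gmP[measurable]: "g M \<in> borel_measurable P" for M using gm measurable_cong_sets[OF sets_eq refl] by blast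
      have gb: "\<bar>g M x\<bar> \<le> real M" for M x by (auto simp: g_def)
      have lim: "(\<lambda>M. \<integral>x. g M x \<partial>P) \<longlonglongrightarrow> (\<integral>x. h x \<partial>P)"
      proof (rule integral_dominated_convergence[where w="\<lambda>x. \<bar>h x\<bar>"])
        show "integrable P (\<lambda>x. \<bar>h x\<bar>)" using hint by simp
        show "AE x in P. (\<lambda>M. g M x) \<longlonglongrightarrow> h x"
          using finP posP
        proof eventually_elim
          case (elim x)
          have "eventually (\<lambda>M. g M x = h x) sequentially"
          proof -
            obtain N :: nat where "\<bar>h x\<bar> \<le> real N" using real_arch_simple by blast
            then show ?thesis using elim
              by (intro eventually_sequentiallyI[of N]) (auto simp: g_def)
          qed
          then show ?case by (rule tendsto_eventually)
        qed
        show "AE x in P. norm (g M x) \<le> \<bar>h x\<bar>" for M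
          using finP posP by eventually_elim (auto simp: g_def)
      qed simp_all
      have DVg: "DV P Q (g M) \<ge> (\<integral>x. g M x \<partial>P) - exp (- real M)" for M
      proof -
        have "(\<integral>x. exp (g M x) \<partial>Q) \<le> 1 + exp (- real M)"
        proof (rule bound_exp[OF gm gb])
          fix x
          show "exp (g M x) \<le> enn2real (f x) + exp (- real M)"
          proof (cases "f x = 0 \<or> f x = \<infinity>")
            case True then show ?thesis by (auto simp: g_def)
          next
            case False
            then have y: "enn2real (f x) > 0" by (simp add: enn2real_positive_iff less_top zero_less_iff_neq_zero)
            have "g M x \<le> max (- real M) (h x)" using False by (auto simp: g_def)
            then have "exp (g M x) \<le> exp (max (- real M) (h x))" by simp
            also have "\<dots> \<le> enn2real (f x) + exp (- real M)"
              using y by (auto simp: max_def h_def)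
            finally show ?thesis .
          qed
        qed
        moreover have "(\<integral>x. exp (g M x) \<partial>Q) > 0"
        proof -
          have "(\<integral>x. exp (- real M) \<partial>Q) \<le> (\<integral>x. exp (g M x) \<partial>Q)"
            by (rule integral_mono) (auto intro!: Q.integrable_const_bound[where B="exp (real M)"] AE_I2
                simp: abs_le_iff, (use gb in \<open>smt (verit)\<close>)+)
          then have "exp (- real M) \<le> (\<integral>x. exp (g M x) \<partial>Q)" by (simp add: Q.prob_space)
          then show ?thesis using exp_gt_zero[of "- real M"] by linarith
        qed
        ultimately have "ln (\<integral>x. exp (g M x) \<partial>Q) \<le> ln (1 + exp (- real M))" by simp
        also have "\<dots> \<le> exp (- real M)" by (rule ln_add_one_self_le_self) simp
        finally show ?thesis by (simp add: DV_def)
      qed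
      have "c < (\<integral>x. h x \<partial>P)" using c re by simp
      define eps where "eps = (\<integral>x. h x \<partial>P) - c"
      have eps: "eps > 0" using \<open>c < (\<integral>x. h x \<partial>P)\<close> by (simp add: eps_def)
      have ev1: "eventually (\<lambda>M. (\<integral>x. h x \<partial>P) - eps/2 < (\<integral>x. g M x \<partial>P)) sequentially"
        using lim eps by (intro order_tendstoD) auto
      have "(\<lambda>M. exp (- real M)) \<longlonglongrightarrow> 0"
        by (rule filterlim_compose[OF exp_at_bot]) (simp add: filterlim_uminus_at_bot filterlim_real_sequentially)
      then have ev2: "eventually (\<lambda>M. exp (- real M) < eps/2) sequentially"
        using eps by (intro order_tendstoD) auto
      obtain M where M: "(\<integral>x. h x \<partial>P) - eps/2 < (\<integral>x. g M x \<partial>P)" "exp (- real M) < eps/2"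
        using eventually_conj[OF ev1 ev2] by (auto simp: eventually_sequentially)
      have "c < DV P Q (g M)" using DVg[of M] M eps_def by argo
      then show ?thesis using gm gb by blast
    next
      case hint: False
      define g where "g M x = (if f x = 0 \<or> f x = \<infinity> then 0 else max 0 (min (real M) (h x)))" for M :: nat and x
      have gm[measurable]: "g M \<in> borel_measurable Q" for M
      proof -
        have "h \<in> borel_measurable Q" using hm measurable_cong_sets[OF sets_eq refl] by blast
        then show ?thesis unfolding g_def by measurable
      qed
      have gmP[measurable]: "g M \<in> borel_measurable P" for M using gm measurable_cong_sets[OF sets_eq refl] by blast
      have gb: "\<bar>g M x\<bar> \<le> real M" for M x by (auto simp: g_def)
      have g0: "0 \<le> g M x" for M x by (auto simp: g_def)
      have DVg: "DV P Q (g M) \<ge> (\<integral>x. g M x \<partial>P) - 1" for M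
      proof -
        have "(\<integral>x. exp (g M x) \<partial>Q) \<le> 1 + exp 0"
        proof (rule bound_exp[OF gm gb])
          fix x
          show "exp (g M x) \<le> enn2real (f x) + exp 0"
          proof (cases "f x = 0 \<or> f x = \<infinity>")
            case True then show ?thesis by (auto simp: g_def)
          next
            case False
            then have y: "enn2real (f x) > 0" by (simp add: enn2real_positive_iff less_top zero_less_iff_neq_zero)
            have "g M x \<le> max 0 (h x)" using False by (auto simp: g_def)
            then have "exp (g M x) \<le> exp (max 0 (h x))" by simp
            also have "\<dots> \<le> enn2real (f x) + exp 0"
              using y by (auto simp: max_def h_def)
            finally show ?thesis .
          qed
        qed
        moreover have "(\<integral>x. exp (g M x) \<partial>Q) \<ge> 1"
        proof -
          have "(\<integral>x. 1 \<partial>Q) \<le> (\<integral>x. exp (g M x) \<partial>Q)"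
            by (rule integral_mono) (auto intro!: Q.integrable_const_bound[where B="exp (real M)"] AE_I2
                simp: abs_le_iff g0, (use gb in \<open>smt (verit)\<close>)+)
          then show ?thesis by (simp add: Q.prob_space)
        qed
        ultimately have "ln (\<integral>x. exp (g M x) \<partial>Q) \<le> ln 2" by simp
        also have "ln 2 \<le> (1::real)" using ln_le_minus_one[of 2] by simp
        finally show ?thesis by (simp add: DV_def)
      qed
      have neg: "(\<integral>\<^sup>+x. ennreal (max 0 (- h x)) \<partial>P) \<le> 1"
      proof -
        have "(\<integral>\<^sup>+x. ennreal (max 0 (- h x)) \<partial>P) = (\<integral>\<^sup>+x. f x * ennreal (max 0 (- h x)) \<partial>Q)"
          unfolding dens[symmetric]
        proof (rule nn_integral_density)
          have "h \<in> borel_measurable Q" using hm measurable_cong_sets[OF sets_eq refl] by blast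
          then show "(\<lambda>x. ennreal (max 0 (- h x))) \<in> borel_measurable Q" by measurable
        qed simp
        also have "\<dots> \<le> (\<integral>\<^sup>+x. 1 \<partial>Q)"
        proof (rule nn_integral_mono_AE)
          show "AE x in Q. f x * ennreal (max 0 (- h x)) \<le> 1"
            using fin
          proof eventually_elim
            case (elim x)
            show ?case
            proof (cases "f x = 0")
              case True then show ?thesis by simp
            next
              case False
              then have y: "enn2real (f x) > 0" using elim
                by (simp add: enn2real_positive_iff less_top zero_less_iff_neq_zero)
              have "f x = ennreal (enn2real (f x))" using elim by (simp add: less_top)
              then have "f x * ennreal (max 0 (- h x)) = ennreal (enn2real (f x) * max 0 (- h x))"
                by (metis ennreal_mult' enn2real_nonneg)
              also have "\<dots> \<le> ennreal 1"
                using neg_xlnx_le[OF y] by (intro ennreal_leI) (simp add: h_def)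
              finally show ?thesis by simp
            qed
          qed
        qed
        also have "\<dots> = 1" by (simp add: Q.emeasure_space_1)
        finally show ?thesis .
      qed
      have pos_inf: "(\<integral>\<^sup>+x. ennreal (max 0 (h x)) \<partial>P) = \<infinity>"
      proof (rule ccontr)
        assume a1: "(\<integral>\<^sup>+x. ennreal (max 0 (h x)) \<partial>P) \<noteq> \<infinity>"
        have a2: "(\<integral>\<^sup>+x. ennreal (max 0 (- h x)) \<partial>P) < \<infinity>"
          using neg ennreal_one_less_top unfolding infinity_ennreal_def by (rule le_less_trans)
        have "(\<integral>\<^sup>+x. ennreal (max 0 (h x)) \<partial>P) + (\<integral>\<^sup>+x. ennreal (max 0 (- h x)) \<partial>P) < \<infinity>"
          using a1 a2 by (simp add: less_top)
        also have "(\<integral>\<^sup>+x. ennreal (max 0 (h x)) \<partial>P) + (\<integral>\<^sup>+x. ennreal (max 0 (- h x)) \<partial>P)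
            = (\<integral>\<^sup>+x. ennreal (max 0 (h x)) + ennreal (max 0 (- h x)) \<partial>P)"
          by (rule nn_integral_add[symmetric]) auto
        also have "\<dots> = (\<integral>\<^sup>+x. ennreal (norm (h x)) \<partial>P)"
          by (intro nn_integral_cong) (auto simp: max_def ennreal_plus[symmetric] simp del: ennreal_plus)
        finally have "integrable P h" by (intro integrableI_bounded) auto
        with hint show False by simp
      qed
      have gae: "AE x in P. g M x = min (real M) (max 0 (h x))" for M
        using finP posP by eventually_elim (auto simp: g_def)
      have "(\<lambda>M. \<integral>\<^sup>+x. ennreal (min (real M) (max 0 (h x))) \<partial>P) \<longlonglongrightarrow> (\<integral>\<^sup>+x. ennreal (max 0 (h x)) \<partial>P)"
      proof (rule nn_integral_LIMSEQ)
        show "incseq (\<lambda>M x. ennreal (min (real M) (max 0 (h x))))"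
          by (auto simp: incseq_def le_fun_def intro!: ennreal_leI)
        fix x
        have "eventually (\<lambda>M. ennreal (min (real M) (max 0 (h x))) = ennreal (max 0 (h x))) sequentially"
        proof -
          obtain N :: nat where "\<bar>h x\<bar> \<le> real N" using real_arch_simple by blast
          then show ?thesis by (intro eventually_sequentiallyI[of N]) auto
        qed
        then show "(\<lambda>M. ennreal (min (real M) (max 0 (h x)))) \<longlonglongrightarrow> ennreal (max 0 (h x))"
          by (rule tendsto_eventually)
      qed auto
      then have "eventually (\<lambda>M. ennreal (\<bar>c\<bar> + 1) < \<integral>\<^sup>+x. ennreal (min (real M) (max 0 (h x))) \<partial>P) sequentially"
        unfolding pos_inf by (intro order_tendstoD) auto
      then obtain M where M: "ennreal (\<bar>c\<bar> + 1) < (\<integral>\<^sup>+x. ennreal (min (real M) (max 0 (h x))) \<partial>P)"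
        by (auto simp: eventually_sequentially)
      have "(\<integral>\<^sup>+x. ennreal (min (real M) (max 0 (h x))) \<partial>P) = (\<integral>\<^sup>+x. ennreal (g M x) \<partial>P)"
        by (rule nn_integral_cong_AE) (use gae[of M] in auto)
      also have "\<dots> = ennreal (\<integral>x. g M x \<partial>P)"
        by (rule nn_integral_eq_integral) (auto intro!: P.integrable_const_bound[where B="real M"] AE_I2 gb g0)
      finally have "ennreal (\<bar>c\<bar> + 1) < ennreal (\<integral>x. g M x \<partial>P)" using M by simp
      then have "\<bar>c\<bar> + 1 < (\<integral>x. g M x \<partial>P)" by (subst (asm) ennreal_less_iff) auto
      then have "c < DV P Q (g M)" using DVg[of M] by linarith
      then show ?thesis using gm gb by blast
    qed
  qed
qed

definition gfun :: "(nat \<Rightarrow> 'a set) \<Rightarrow> nat \<times> nat \<times> nat list \<Rightarrow> 'a \<Rightarrow> real" where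
  "gfun E idx x = (case idx of (M, m, xs) \<Rightarrow>
     - real M + (1 / (real m + 1)) * sum_list (map (\<lambda>i. indicator (E i) x) xs))"

lemma gfun_bound: "\<bar>gfun E (M, m, xs) x\<bar> \<le> real M + real (length xs)"
proof -
  have s0: "0 \<le> sum_list (map (\<lambda>i. indicator (E i) x :: real) xs)"
    by (induction xs) auto
  have s1: "sum_list (map (\<lambda>i. indicator (E i) x :: real) xs) \<le> real (length xs)"
    by (induction xs) (auto simp: indicator_def)
  have d: "0 < 1 / (real m + 1)" "1 / (real m + 1) \<le> 1" by (auto simp: field_simps)
  have "(1 / (real m + 1)) * sum_list (map (\<lambda>i. indicator (E i) x) xs) \<le> 1 * real (length xs)"
    using s0 s1 d by (intro mult_mono) auto
  moreover have "0 \<le> (1 / (real m + 1)) * sum_list (map (\<lambda>i. indicator (E i) x) xs)"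
    using s0 d by simp
  ultimately show ?thesis by (simp add: gfun_def)
qed

lemma gfun_measurable[measurable]:
  assumes "\<And>i. E i \<in> sets M"
  shows "gfun E idx \<in> borel_measurable M"
proof -
  obtain M' m xs where idx: "idx = (M', m, xs)" by (metis prod_cases3)
  have "(\<lambda>x. sum_list (map (\<lambda>i. indicator (E i) x :: real) xs)) \<in> borel_measurable M"
    using assms by (induction xs) auto
  then show ?thesis unfolding gfun_def idx by simp
qed

lemma approx_DV:
  fixes P Q :: "'a::polish_space measure"
  assumes P: "prob_space P" "sets P = sets borel" and Q: "prob_space Q" "sets Q = sets borel"
    and BB: "topological_basis BB" "countable BB"
    and g[measurable]: "g \<in> borel_measurable borel" and gB: "\<And>x. \<bar>g x\<bar> \<le> B" and e: "e > 0"
  shows "\<exists>idx. DV P Q g - e < DV P Q (gfun (from_nat_into (cfam BB)) idx)"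
proof -
  interpret P: prob_space P by fact
  interpret Q: prob_space Q by fact
  have fP: "finite_measure P" and fQ: "finite_measure Q" by unfold_locales
  have spP: "space P = UNIV" using sets_eq_imp_space_eq[OF P(2)] by simp
  have spQ: "space Q = UNIV" using sets_eq_imp_space_eq[OF Q(2)] by simp
  define C where "C = cfam BB"
  have Cc: "countable C" unfolding C_def by (rule countable_cfam[OF BB(2)])
  have Cb: "X \<in> C \<Longrightarrow> X \<in> sets borel" for X unfolding C_def using cfam_open[OF BB(1)] by auto
  define M :: nat where "M = nat \<lceil>B\<rceil>"
  have gM: "\<bar>g x\<bar> \<le> real M" for x using gB[of x] unfolding M_def by linarith
  define K where "K = 1 + exp (2 * real M)"
  have K: "K > 0" by (simp add: K_def add_pos_pos)
  define m :: nat where "m = nat \<lceil>2 * K / e\<rceil>"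
  define d where "d = 1 / (real m + 1)"
  have d: "d > 0" by (simp add: d_def)
  have "2 * K / e \<le> real m" unfolding m_def by linarith
  then have "2 * K / e < real m + 1" by simp
  then have "2 * K < e * (real m + 1)" using e by (simp add: field_simps)
  then have dK: "2 * K * d < e" unfolding d_def by (simp add: field_simps)
  define N :: nat where "N = 2 * M * (m + 1)"
  have Nd: "- real M + real N * d = real M" by (simp add: N_def d_def field_simps)
  define A where "A i = {x. - real M + real i * d \<le> g x}" for i :: nat
  have A[measurable]: "A i \<in> sets borel" for i unfolding A_def by measurable
  define eta where "eta = 1 / (real N + 1)"
  have eta: "eta > 0" by (simp add: eta_def)
  have "\<forall>i. \<exists>X\<in>C. measure P ((A i - X) \<union> (X - A i)) < eta \<and> measure Q ((A i - X) \<union> (X - A i)) < eta"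
    using approx_cfam[OF fP P(2) fQ Q(2) BB A eta] unfolding C_def by blast
  then obtain Bf where Bf: "\<And>i. Bf i \<in> C"
    "\<And>i. measure P ((A i - Bf i) \<union> (Bf i - A i)) < eta"
    "\<And>i. measure Q ((A i - Bf i) \<union> (Bf i - A i)) < eta"
    by metis
  have Bfm[measurable]: "Bf i \<in> sets borel" for i using Cb[OF Bf(1)] .
  define xs where "xs = map (\<lambda>i. to_nat_on C (Bf i)) [1..<N+1]"
  define g' where "g' = gfun (from_nat_into C) (M, m, xs)"
  have g'eq: "g' x = - real M + d * (\<Sum>i\<in>{1..N}. indicator (Bf i) x)" for x
  proof -
    have "sum_list (map (\<lambda>i. indicator (from_nat_into C i) x) xs)
        = sum_list (map (\<lambda>i. indicator (Bf i) x) [1..<N+1])"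
      unfolding xs_def map_map comp_def using from_nat_into_to_nat_on[OF Cc Bf(1)] by simp
    also have "\<dots> = (\<Sum>i\<in>{1..<N+1}. indicator (Bf i) x)"
      by (simp only: sum_set_upt_conv_sum_list_nat[symmetric] set_upt)
    also have "{1..<N+1} = {1..N}" by auto
    also have "\<dots> = {1..N}" ..
    finally show ?thesis by (simp add: g'_def gfun_def d_def)
  qed
  have g'm[measurable]: "g' \<in> borel_measurable borel"
    unfolding g'_def by (rule gfun_measurable) (use from_nat_into[of C] Cb empty_in_cfam C_def in \<open>metis empty_iff\<close>)
  have g'b: "\<bar>g' x\<bar> \<le> real M" for x
  proof -
    have s0: "0 \<le> (\<Sum>i\<in>{1..N}. indicator (Bf i) x :: real)" by (simp add: sum_nonneg)
    have "(\<Sum>i\<in>{1..N}. indicator (Bf i) x :: real) \<le> (\<Sum>i\<in>{1..N}. 1)"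
      by (intro sum_mono) (simp add: indicator_def)
    then have s1: "(\<Sum>i\<in>{1..N}. indicator (Bf i) x :: real) \<le> real N" by simp
    have "d * (\<Sum>i\<in>{1..N}. indicator (Bf i) x) \<le> d * real N" using s1 d by (intro mult_left_mono) auto
    moreover have "0 \<le> d * (\<Sum>i\<in>{1..N}. indicator (Bf i) x)" using s0 d by simp
    ultimately show ?thesis using Nd unfolding g'eq by (simp add: algebra_simps)
  qed
  define D where "D i = (A i - Bf i) \<union> (Bf i - A i)" for i
  have Dm[measurable]: "D i \<in> sets borel" for i unfolding D_def by measurable
  have pw: "\<bar>g x - g' x\<bar> \<le> d + d * (\<Sum>i\<in>{1..N}. indicator (D i) x)" for x
  proof -
    define s where "s = - real M + d * (\<Sum>i\<in>{1..N}. if - real M + real i * d \<le> g x then 1 else 0 :: real)"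
    have "s \<le> g x \<and> g x \<le> s + d"
      unfolding s_def by (rule step_approx[OF d]) (use gM[of x] Nd in auto)
    moreover have "s = - real M + d * (\<Sum>i\<in>{1..N}. indicator (A i) x)"
      unfolding s_def by (intro arg_cong2[where f="(+)"] refl arg_cong2[where f="(*)"] sum.cong) (auto simp: A_def)
    moreover have "\<bar>(\<Sum>i\<in>{1..N}. indicator (A i) x) - (\<Sum>i\<in>{1..N}. indicator (Bf i) x)\<bar>
        \<le> (\<Sum>i\<in>{1..N}. indicator (D i) x :: real)"
    proof -
      have "\<bar>(\<Sum>i\<in>{1..N}. indicator (A i) x) - (\<Sum>i\<in>{1..N}. indicator (Bf i) x)\<bar>
          = \<bar>\<Sum>i\<in>{1..N}. indicator (A i) x - indicator (Bf i) x :: real\<bar>"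
        by (simp add: sum_subtractf)
      also have "\<dots> \<le> (\<Sum>i\<in>{1..N}. \<bar>indicator (A i) x - indicator (Bf i) x :: real\<bar>)"
        by (rule sum_abs)
      also have "\<dots> = (\<Sum>i\<in>{1..N}. indicator (D i) x)"
        by (intro sum.cong) (auto simp: D_def indicator_def)
      finally show ?thesis .
    qed
    ultimately have sg: "s \<le> g x \<and> g x \<le> s + d" and seq: "s = - real M + d * (\<Sum>i\<in>{1..N}. indicator (A i) x)"
      and sAB: "\<bar>(\<Sum>i\<in>{1..N}. indicator (A i) x) - (\<Sum>i\<in>{1..N}. indicator (Bf i) x)\<bar>
        \<le> (\<Sum>i\<in>{1..N}. indicator (D i) x :: real)" by blast+
    have e1: "\<bar>g x - s\<bar> \<le> d" using sg by (simp add: abs_le_iff)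
    have e2: "s - g' x = d * ((\<Sum>i\<in>{1..N}. indicator (A i) x) - (\<Sum>i\<in>{1..N}. indicator (Bf i) x))"
      unfolding seq g'eq by (simp add: algebra_simps)
    have e3: "\<bar>s - g' x\<bar> = d * \<bar>(\<Sum>i\<in>{1..N}. indicator (A i) x) - (\<Sum>i\<in>{1..N}. indicator (Bf i) x)\<bar>"
      unfolding e2 using d by (simp add: abs_mult)
    have "\<bar>g x - g' x\<bar> \<le> \<bar>g x - s\<bar> + \<bar>s - g' x\<bar>"
      using abs_triangle_ineq[of "g x - s" "s - g' x"] by simp
    also have "\<dots> \<le> d + d * \<bar>(\<Sum>i\<in>{1..N}. indicator (A i) x) - (\<Sum>i\<in>{1..N}. indicator (Bf i) x)\<bar>"
      using e1 e3 by simp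
    also have "\<dots> \<le> d + d * (\<Sum>i\<in>{1..N}. indicator (D i) x)"
      using sAB d by (intro add_left_mono mult_left_mono) auto
    finally show ?thesis .
  qed
  have int_bound: "(\<integral>x. \<bar>g x - g' x\<bar> \<partial>R) \<le> 2 * d"
    if R: "prob_space R" "sets R = sets borel" "\<And>i. measure R (D i) < eta" for R
  proof -
    interpret R: prob_space R by fact
    have spR: "space R = UNIV" using sets_eq_imp_space_eq[OF R(2)] by simp
    have gR[measurable]: "g \<in> borel_measurable R" "g' \<in> borel_measurable R"
      using measurable_cong_sets[OF R(2) refl] g g'm by blast+
    have DR[measurable]: "D i \<in> sets R" for i using R(2) by simp
    have iD: "integrable R (\<lambda>x. indicator (D i) x :: real)" for i
      by (rule integrable_real_indicator) (auto simp: R.emeasure_finite less_top[symmetric])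
    have "(\<integral>x. \<bar>g x - g' x\<bar> \<partial>R) \<le> (\<integral>x. d + d * (\<Sum>i\<in>{1..N}. indicator (D i) x) \<partial>R)"
    proof (rule integral_mono)
      show "integrable R (\<lambda>x. \<bar>g x - g' x\<bar>)"
      proof (rule R.integrable_const_bound[where B="2 * real M"])
        have "\<bar>g x - g' x\<bar> \<le> 2 * real M" for x
          using abs_triangle_ineq4[of "g x" "g' x"] gM[of x] g'b[of x] by linarith
        then show "AE x in R. norm \<bar>g x - g' x\<bar> \<le> 2 * real M" by simp
      qed simp
      show "integrable R (\<lambda>x. d + d * (\<Sum>i\<in>{1..N}. indicator (D i) x))"
        using iD by (auto intro!: Bochner_Integration.integrable_add integrable_mult_right)
    qed (rule pw)
    also have "\<dots> = d + d * (\<Sum>i\<in>{1..N}. measure R (D i))"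
      using iD by (subst Bochner_Integration.integral_add) (auto simp: R.prob_space intro!: integrable_mult_right)
    also have "\<dots> \<le> d + d * (\<Sum>i\<in>{1..N}. eta)"
      using R(3) d by (intro add_left_mono mult_left_mono sum_mono) (auto intro: less_imp_le)
    also have "\<dots> \<le> 2 * d"
    proof -
      have "real N * eta \<le> 1" by (simp add: eta_def field_simps)
      then have "d * (real N * eta) \<le> d" using d by (simp add: mult_le_cancel_left1)
      then show ?thesis by simp
    qed
    finally show ?thesis .
  qed
  have "DV P Q g - DV P Q g' \<le> (\<integral>x. \<bar>g x - g' x\<bar> \<partial>P) + exp (2 * real M) * (\<integral>x. \<bar>g x - g' x\<bar> \<partial>Q)"
  proof (rule DV_lip[OF P(1) Q(1)])
    show "sets P = sets Q" using P(2) Q(2) by simp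
    show "g \<in> borel_measurable Q" "g' \<in> borel_measurable Q"
      using measurable_cong_sets[OF Q(2) refl] g g'm by blast+
  qed (use gM g'b in auto)
  also have "\<dots> \<le> 2 * d + exp (2 * real M) * (2 * d)"
    using int_bound[OF P] int_bound[OF Q] Bf(2,3) unfolding D_def
    by (intro add_mono mult_left_mono) auto
  also have "\<dots> = 2 * K * d" by (simp add: K_def algebra_simps)
  finally have "DV P Q g - e < DV P Q g'" using dK by linarith
  then show ?thesis unfolding g'_def C_def by blast
qed

lemma cfam_enum_sets:
  assumes BB: "topological_basis BB"
  shows "from_nat_into (cfam BB) i \<in> sets borel"
proof -
  have "cfam BB \<noteq> {}" using empty_in_cfam by blast
  then have "from_nat_into (cfam BB) i \<in> cfam BB" by (rule from_nat_into)
  then show ?thesis using cfam_open[OF BB] by auto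
qed

lemma KL_SUP:
  fixes P Q :: "'a::polish_space measure"
  assumes P: "prob_space P" "sets P = sets borel" and Q: "prob_space Q" "sets Q = sets borel"
    and BB: "topological_basis BB" "countable BB"
  shows "rel_entropy P Q = (SUP idx. ereal (DV P Q (gfun (from_nat_into (cfam BB)) idx)))"
proof (rule antisym)
  have sets_eq: "sets P = sets Q" using P Q by simp
  have gm: "gfun (from_nat_into (cfam BB)) idx \<in> borel_measurable Q" for idx
    by (rule gfun_measurable) (use cfam_enum_sets[OF BB(1)] Q(2) in auto)
  show "(SUP idx. ereal (DV P Q (gfun (from_nat_into (cfam BB)) idx))) \<le> rel_entropy P Q"
  proof (rule SUP_least)
    fix idx :: "nat \<times> nat \<times> nat list"
    obtain M m xs where idx: "idx = (M, m, xs)" by (metis prod_cases3)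
    show "ereal (DV P Q (gfun (from_nat_into (cfam BB)) idx)) \<le> rel_entropy P Q"
      by (rule DV_le_rel_entropy[OF P(1) Q(1) sets_eq gm]) (use gfun_bound in \<open>simp add: idx\<close>)
  qed
  show "rel_entropy P Q \<le> (SUP idx. ereal (DV P Q (gfun (from_nat_into (cfam BB)) idx)))"
  proof (rule ccontr)
    assume "\<not> ?thesis"
    then have "(SUP idx. ereal (DV P Q (gfun (from_nat_into (cfam BB)) idx))) < rel_entropy P Q" by simp
    then obtain c where c1: "(SUP idx. ereal (DV P Q (gfun (from_nat_into (cfam BB)) idx))) < ereal c"
      and c2: "ereal c < rel_entropy P Q"
      using ereal_dense2 by blast
    obtain g B where g: "g \<in> borel_measurable Q" "\<forall>x. \<bar>g x\<bar> \<le> B" "c < DV P Q g"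
      using KL_approx_bounded[OF P(1) Q(1) sets_eq c2] by blast
    have gb: "g \<in> borel_measurable borel" using g(1) measurable_cong_sets[OF Q(2) refl] by blast
    obtain idx where "DV P Q g - (DV P Q g - c) < DV P Q (gfun (from_nat_into (cfam BB)) idx)"
      using approx_DV[OF P Q BB gb, of B "DV P Q g - c"] g by auto
    then have "ereal c < ereal (DV P Q (gfun (from_nat_into (cfam BB)) idx))" by simp
    also have "\<dots> \<le> (SUP idx. ereal (DV P Q (gfun (from_nat_into (cfam BB)) idx)))"
      by (rule SUP_upper) simp
    finally show False using c1 by simp
  qed
qed

lemma Psi_measurable[measurable]: "Psi \<in> borel_measurable borel"
  unfolding Psi_def by measurable

lemma measurable_Psi_KL:
  fixes K L :: "'b \<Rightarrow> 'a::polish_space measure"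
  assumes K: "K \<in> M \<rightarrow>\<^sub>M prob_algebra borel" and L: "L \<in> M \<rightarrow>\<^sub>M prob_algebra borel"
  shows "(\<lambda>x. Psi (rel_entropy (K x) (L x))) \<in> borel_measurable M"
proof -
  obtain BB :: "'a set set" where BB: "countable BB" "topological_basis BB"
    using ex_countable_basis by blast
  have Ks[measurable]: "K \<in> M \<rightarrow>\<^sub>M subprob_algebra borel" using K by (rule measurable_prob_algebraD)
  have Ls[measurable]: "L \<in> M \<rightarrow>\<^sub>M subprob_algebra borel" using L by (rule measurable_prob_algebraD)
  define E where "E = from_nat_into (cfam BB)"
  have Em[measurable]: "E i \<in> sets borel" for i unfolding E_def by (rule cfam_enum_sets[OF BB(2)])
  have "(\<lambda>x. SUP idx. ereal (DV (K x) (L x) (gfun E idx))) \<in> borel_measurable M"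
  proof (rule borel_measurable_SUP)
    show "countable (UNIV :: (nat \<times> nat \<times> nat list) set)" by simp
    fix idx :: "nat \<times> nat \<times> nat list"
    have gm[measurable]: "gfun E idx \<in> borel_measurable borel" by (rule gfun_measurable) simp
    have "(\<lambda>x. (\<integral>w. gfun E idx w \<partial>K x)) \<in> borel_measurable M"
      by (rule measurable_compose[OF Ks integral_measurable_subprob_algebra]) simp
    moreover have "(\<lambda>x. (\<integral>w. exp (gfun E idx w) \<partial>L x)) \<in> borel_measurable M"
      by (rule measurable_compose[OF Ls integral_measurable_subprob_algebra]) simp
    ultimately show "(\<lambda>x. ereal (DV (K x) (L x) (gfun E idx))) \<in> borel_measurable M"
      unfolding DV_def by measurable
  qed
  then have "(\<lambda>x. rel_entropy (K x) (L x)) \<in> borel_measurable M"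
    by (rule measurable_cong[THEN iffD1, rotated])
       (use kernel_prob[OF K] kernel_prob[OF L] BB in \<open>simp add: E_def KL_SUP\<close>)
  then show ?thesis by measurable
qed

lemma integral_measurable_kernel2:
  fixes f :: "'a \<Rightarrow> 'b \<Rightarrow> real"
  assumes f[measurable]: "(\<lambda>(x, y). f x y) \<in> borel_measurable (M \<Otimes>\<^sub>M N)"
  assumes L[measurable]: "L \<in> M \<rightarrow>\<^sub>M subprob_algebra N"
  shows "(\<lambda>x. \<integral>y. f x y \<partial>L x) \<in> borel_measurable M"
proof -
  have d: "(\<lambda>x. distr (L x) (M \<Otimes>\<^sub>M N) (\<lambda>y. (x, y))) \<in> M \<rightarrow>\<^sub>M subprob_algebra (M \<Otimes>\<^sub>M N)"
    by (rule measurable_distr2[where f="\<lambda>x y. (x, y)", OF _ L]) (simp add: measurable_ident_sets)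
  have i: "(\<lambda>Q. integral\<^sup>L Q (\<lambda>(x, y). f x y)) \<in> subprob_algebra (M \<Otimes>\<^sub>M N) \<rightarrow>\<^sub>M borel"
    by (rule integral_measurable_subprob_algebra[OF f])
  have "(\<lambda>x. integral\<^sup>L (distr (L x) (M \<Otimes>\<^sub>M N) (\<lambda>y. (x, y))) (\<lambda>(x, y). f x y)) \<in> borel_measurable M"
    using measurable_compose[OF d i] by simp
  then show ?thesis
  proof (rule measurable_cong[THEN iffD1, rotated])
    fix x assume x: "x \<in> space M"
    have "(\<lambda>y. (x, y)) \<in> N \<rightarrow>\<^sub>M M \<Otimes>\<^sub>M N"
      using x by simp
    then have "(\<lambda>y. (x, y)) \<in> L x \<rightarrow>\<^sub>M M \<Otimes>\<^sub>M N"
      by (subst measurable_cong_sets[OF sets_kernel[OF L x] refl])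
    then have "integral\<^sup>L (distr (L x) (M \<Otimes>\<^sub>M N) (\<lambda>y. (x, y))) (\<lambda>(x, y). f x y) = (\<integral>y. (\<lambda>(x, y). f x y) (x, y) \<partial>L x)"
      by (rule integral_distr[OF _ f])
    then show "integral\<^sup>L (distr (L x) (M \<Otimes>\<^sub>M N) (\<lambda>y. (x, y))) (\<lambda>(x, y). f x y) = (\<integral>y. f x y \<partial>L x)"
      by simp
  qed
qed
lemma abs_integral_le_const:
  fixes f :: "'a \<Rightarrow> real"
  assumes M: "prob_space M" and fb: "\<And>x. x \<in> space M \<Longrightarrow> \<bar>f x\<bar> \<le> B"
  shows "\<bar>\<integral>x. f x \<partial>M\<bar> \<le> B"
proof -
  interpret M: prob_space M by fact
  obtain x0 where "x0 \<in> space M" using M.not_empty by blast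
  then have B0: "0 \<le> B" using fb[of x0] by linarith
  show ?thesis
  proof (cases "integrable M f")
    case True
    have "\<bar>\<integral>x. f x \<partial>M\<bar> \<le> (\<integral>x. \<bar>f x\<bar> \<partial>M)" by (rule integral_abs_bound)
    also have "\<dots> \<le> (\<integral>x. B \<partial>M)" by (rule integral_mono) (use True fb in auto)
    finally show ?thesis by (simp add: M.prob_space)
  next
    case False
    then show ?thesis using B0 by (simp add: not_integrable_integral_eq)
  qed
qed

lemma swap_identity:
  fixes PZ :: "'z measure" and G :: "(nat \<Rightarrow> 'z) \<Rightarrow> 'z \<Rightarrow> real"
  assumes PZ: "prob_space PZ" and j: "j < n"
    and G[measurable]: "(\<lambda>(s, z). G s z) \<in> borel_measurable (PiM {0..<n} (\<lambda>_. PZ) \<Otimes>\<^sub>M PZ)"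
    and Gb: "\<And>s z. s \<in> space (PiM {0..<n} (\<lambda>_. PZ)) \<Longrightarrow> z \<in> space PZ \<Longrightarrow> \<bar>G s z\<bar> \<le> Bd"
  shows "(\<integral>s. (\<integral>z. G s z \<partial>PZ) \<partial>PiM {0..<n} (\<lambda>_. PZ))
       = (\<integral>s. (\<integral>z. G (s(j := z)) (s j) \<partial>PZ) \<partial>PiM {0..<n} (\<lambda>_. PZ))"
proof -
  interpret PZ: prob_space PZ by fact
  define I' where "I' = {0..<n} - {j}"
  define SD where "SD = PiM {0..<n} (\<lambda>_. PZ)"
  define PI where "PI = PiM I' (\<lambda>_. PZ)"
  have ins: "insert j I' = {0..<n}" using j by (auto simp: I'_def)
  interpret PI: prob_space PI unfolding PI_def by (rule prob_space_PiM) (rule PZ)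
  interpret SD: prob_space SD unfolding SD_def by (rule prob_space_PiM) (rule PZ)
  interpret ZZ: pair_sigma_finite PZ PZ ..
  interpret ZP: pair_sigma_finite PZ PI ..
  interpret ZZ': pair_prob_space PZ PZ ..
  interpret ZP': pair_prob_space PZ PI ..
  have Gm: "(\<lambda>(s, z). G s z) \<in> borel_measurable (SD \<Otimes>\<^sub>M PZ)" using G by (simp add: SD_def)
  have dist: "distr (PZ \<Otimes>\<^sub>M PI) SD (\<lambda>(x, X). X(j := x)) = SD"
    using distr_pair_PiM_eq_PiM[of I' "\<lambda>_. PZ" j] PZ unfolding SD_def PI_def ins by simp
  have add_dim: "(\<lambda>(X, x). X(j := x)) \<in> PI \<Otimes>\<^sub>M PZ \<rightarrow>\<^sub>M SD"
    using measurable_add_dim[of j I' "\<lambda>_. PZ"] unfolding SD_def PI_def ins .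
  have add_dim_SD: "(\<lambda>(X, x). X(j := x)) \<in> SD \<Otimes>\<^sub>M PZ \<rightarrow>\<^sub>M SD"
    using measurable_add_dim[of j "{0..<n}" "\<lambda>_. PZ"] j unfolding SD_def by (simp add: insert_absorb)
  have insm: "(\<lambda>(x, X). X(j := x)) \<in> PZ \<Otimes>\<^sub>M PI \<rightarrow>\<^sub>M SD"
  proof -
    have "(\<lambda>p. (\<lambda>(X, x). X(j := x)) ((\<lambda>(x, y). (y, x)) p)) \<in> PZ \<Otimes>\<^sub>M PI \<rightarrow>\<^sub>M SD"
      by (rule measurable_compose[OF measurable_pair_swap' add_dim])
    then show ?thesis by (simp add: case_prod_beta')
  qed
  have compj: "(\<lambda>s. s j) \<in> SD \<rightarrow>\<^sub>M PZ" unfolding SD_def using j by (intro measurable_component_singleton) auto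
  define H1 where "H1 s = (\<integral>z. G s z \<partial>PZ)" for s
  define H2 where "H2 s = (\<integral>z. G (s(j := z)) (s j) \<partial>PZ)" for s
  have G2m: "(\<lambda>(s, z). G (s(j := z)) (s j)) \<in> borel_measurable (SD \<Otimes>\<^sub>M PZ)"
  proof -
    have "(\<lambda>p. (fst p, snd p)) \<in> SD \<Otimes>\<^sub>M PZ \<rightarrow>\<^sub>M SD \<Otimes>\<^sub>M PZ" by simp
    have m1: "(\<lambda>p. (fst p)(j := snd p)) \<in> SD \<Otimes>\<^sub>M PZ \<rightarrow>\<^sub>M SD"
      using add_dim_SD by (simp add: case_prod_beta')
    have m2: "(\<lambda>p. fst p j) \<in> SD \<Otimes>\<^sub>M PZ \<rightarrow>\<^sub>M PZ"
      by (rule measurable_compose[OF measurable_fst compj])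
    have "(\<lambda>p. ((fst p)(j := snd p), fst p j)) \<in> SD \<Otimes>\<^sub>M PZ \<rightarrow>\<^sub>M SD \<Otimes>\<^sub>M PZ"
      using m1 m2 by (rule measurable_Pair)
    from measurable_compose[OF this Gm] show ?thesis by (simp add: case_prod_beta')
  qed
  have H1m: "H1 \<in> borel_measurable SD" unfolding H1_def
    by (rule PZ.borel_measurable_lebesgue_integral) (use Gm in simp)
  have H2m: "H2 \<in> borel_measurable SD" unfolding H2_def
    by (rule PZ.borel_measurable_lebesgue_integral) (use G2m in simp)
  have H1b: "\<bar>H1 s\<bar> \<le> Bd" if "s \<in> space SD" for s unfolding H1_def
    by (rule abs_integral_le_const[OF PZ], rule Gb) (use that in \<open>auto simp: SD_def\<close>)
  have H2b: "\<bar>H2 s\<bar> \<le> Bd" if "s \<in> space SD" for s unfolding H2_def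
  proof (rule abs_integral_le_const[OF PZ], rule Gb)
    fix z assume z: "z \<in> space PZ"
    have "(s, z) \<in> space (SD \<Otimes>\<^sub>M PZ)" using that z by (simp add: space_pair_measure)
    from measurable_space[OF add_dim_SD this] show "s(j := z) \<in> space (PiM {0..<n} (\<lambda>_. PZ))"
      by (simp add: SD_def)
  next
    show "s j \<in> space PZ" using measurable_space[OF compj that] .
  qed
  have red: "(\<integral>s. H s \<partial>SD) = (\<integral>X. (\<integral>x. H (X(j := x)) \<partial>PZ) \<partial>PI)"
    if Hm: "H \<in> borel_measurable SD" and Hb: "\<And>s. s \<in> space SD \<Longrightarrow> \<bar>H s\<bar> \<le> Bd" for H
  proof -
    have "(\<integral>s. H s \<partial>SD) = (\<integral>s. H s \<partial>distr (PZ \<Otimes>\<^sub>M PI) SD (\<lambda>(x, X). X(j := x)))"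
      by (simp add: dist)
    also have "\<dots> = (\<integral>p. H ((\<lambda>(x, X). X(j := x)) p) \<partial>(PZ \<Otimes>\<^sub>M PI))"
      by (rule integral_distr[OF insm Hm])
    also have "(\<lambda>p. H ((\<lambda>(x, X). X(j := x)) p)) = (\<lambda>(x, X). H (X(j := x)))"
      by (simp add: fun_eq_iff)
    also have "integral\<^sup>L (PZ \<Otimes>\<^sub>M PI) (\<lambda>(x, X). H (X(j := x))) = (\<integral>X. (\<integral>x. H (X(j := x)) \<partial>PZ) \<partial>PI)"
    proof (rule ZP.integral_snd[symmetric, where f="\<lambda>x X. H (X(j := x))"])
      show "integrable (PZ \<Otimes>\<^sub>M PI) (\<lambda>(x, X). H (X(j := x)))"
      proof (rule ZP'.integrable_const_bound[where B=Bd])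
        show "AE x in PZ \<Otimes>\<^sub>M PI. norm ((\<lambda>(x, X). H (X(j := x))) x) \<le> Bd"
        proof (rule AE_I2)
          fix p assume "p \<in> space (PZ \<Otimes>\<^sub>M PI)"
          from measurable_space[OF insm this] have "(\<lambda>(x, X). X(j := x)) p \<in> space SD" .
          then show "norm ((\<lambda>(x, X). H (X(j := x))) p) \<le> Bd" using Hb by (auto simp: case_prod_beta')
        qed
        have "(\<lambda>p. H ((\<lambda>(x, X). X(j := x)) p)) \<in> borel_measurable (PZ \<Otimes>\<^sub>M PI)"
          by (rule measurable_compose[OF insm Hm])
        also have "(\<lambda>p. H ((\<lambda>(x, X). X(j := x)) p)) = (\<lambda>(x, X). H (X(j := x)))"
          by (simp add: fun_eq_iff)
        finally show "(\<lambda>(x, X). H (X(j := x))) \<in> borel_measurable (PZ \<Otimes>\<^sub>M PI)" .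
      qed
    qed
    finally show ?thesis .
  qed
  have pt: "(\<integral>x. H1 (X(j := x)) \<partial>PZ) = (\<integral>x. H2 (X(j := x)) \<partial>PZ)" if X: "X \<in> space PI" for X
  proof -
    have ym: "(\<lambda>y. X(j := y)) \<in> PZ \<rightarrow>\<^sub>M SD"
    proof -
      have "(\<lambda>y. (X, y)) \<in> PZ \<rightarrow>\<^sub>M PI \<Otimes>\<^sub>M PZ" using X by simp
      from measurable_compose[OF this add_dim] show ?thesis by simp
    qed
    have Fm: "(\<lambda>(x, y). G (X(j := y)) x) \<in> borel_measurable (PZ \<Otimes>\<^sub>M PZ)"
    proof -
      have "(\<lambda>p. (X(j := snd p), fst p)) \<in> PZ \<Otimes>\<^sub>M PZ \<rightarrow>\<^sub>M SD \<Otimes>\<^sub>M PZ"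
        by (intro measurable_Pair measurable_compose[OF measurable_snd ym] measurable_fst)
      from measurable_compose[OF this Gm] show ?thesis by (simp add: case_prod_beta')
    qed
    have Fint: "integrable (PZ \<Otimes>\<^sub>M PZ) (\<lambda>(x, y). G (X(j := y)) x)"
    proof (rule ZZ'.integrable_const_bound[where B=Bd])
      show "AE p in PZ \<Otimes>\<^sub>M PZ. norm ((\<lambda>(x, y). G (X(j := y)) x) p) \<le> Bd"
      proof (rule AE_I2)
        fix p assume p: "p \<in> space (PZ \<Otimes>\<^sub>M PZ)"
        then have "snd p \<in> space PZ" "fst p \<in> space PZ" by (auto simp: space_pair_measure)
        with measurable_space[OF ym] have "X(j := snd p) \<in> space SD" by blast
        then show "norm ((\<lambda>(x, y). G (X(j := y)) x) p) \<le> Bd"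
          using Gb \<open>fst p \<in> space PZ\<close> by (auto simp: case_prod_beta' SD_def)
      qed
    qed (rule Fm)
    have "(\<integral>x. H2 (X(j := x)) \<partial>PZ) = (\<integral>x. (\<integral>y. G (X(j := y)) x \<partial>PZ) \<partial>PZ)"
      unfolding H2_def by simp
    also have "\<dots> = (\<integral>y. (\<integral>x. G (X(j := y)) x \<partial>PZ) \<partial>PZ)"
      by (rule ZZ.Fubini_integral[OF Fint, symmetric])
    also have "\<dots> = (\<integral>x. H1 (X(j := x)) \<partial>PZ)" unfolding H1_def ..
    finally show ?thesis by simp
  qed
  have "(\<integral>s. H1 s \<partial>SD) = (\<integral>X. (\<integral>x. H1 (X(j := x)) \<partial>PZ) \<partial>PI)" by (rule red[OF H1m H1b]) 
  also have "\<dots> = (\<integral>X. (\<integral>x. H2 (X(j := x)) \<partial>PZ) \<partial>PI)" by (rule Bochner_Integration.integral_cong[OF refl pt])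
  also have "\<dots> = (\<integral>s. H2 s \<partial>SD)" by (rule red[OF H2m H2b, symmetric])
  finally show ?thesis unfolding H1_def H2_def SD_def .
qed

lemma Psi_le_1: "Psi x \<le> 1"
proof (cases "x = \<infinity>")
  case True then show ?thesis by (simp add: Psi_def)
next
  case False
  have "min (real_of_ereal x / 2) (1 - exp (- real_of_ereal x)) \<le> 1" by (simp add: min_le_iff_disj)
  then have "sqrt (min (real_of_ereal x / 2) (1 - exp (- real_of_ereal x))) \<le> sqrt 1"
    by (rule real_sqrt_le_mono)
  then show ?thesis using False by (simp add: Psi_def)
qed

theorem corollary2:
  fixes n :: nat and PZ :: "'z measure" and PR :: "'r measure"
    and K :: "(nat \<Rightarrow> 'z) \<times> 'r \<Rightarrow> 'w::polish_space measure"
    and loss :: "'w \<Rightarrow> 'z \<Rightarrow> real" and L a b :: real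
  assumes n_pos: "n > 0"
    and PZ: "prob_space PZ" and PR: "prob_space PR"
    and K_meas: "K \<in> sample_dist n PZ \<Otimes>\<^sub>M PR \<rightarrow>\<^sub>M prob_algebra (borel :: 'w measure)"
    and loss_meas: "(\<lambda>(w, z). loss w z) \<in> borel_measurable (borel \<Otimes>\<^sub>M PZ)"
    and lipschitz: "\<And>z. L-lipschitz_on UNIV (\<lambda>w. loss w z)"
    and bounded: "\<And>w z. a \<le> loss w z \<and> loss w z \<le> b"
  shows "\<bar>exp_gen n PZ PR K loss\<bar>
           \<le> (b - a) * ((1 / real n) * (\<Sum>j<n. \<integral>sr. tv_dist (K sr) (loo_kernel PZ K j (fst sr) (snd sr))
                                              \<partial>(sample_dist n PZ \<Otimes>\<^sub>M PR)))
       \<and> (b - a) * ((1 / real n) * (\<Sum>j<n. \<integral>sr. tv_dist (K sr) (loo_kernel PZ K j (fst sr) (snd sr))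
                                              \<partial>(sample_dist n PZ \<Otimes>\<^sub>M PR)))
           \<le> (b - a) / real n * (\<Sum>j<n. \<integral>sr. Psi (rel_entropy (K sr) (loo_kernel PZ K j (fst sr) (snd sr)))
                                              \<partial>(sample_dist n PZ \<Otimes>\<^sub>M PR))"
proof -
  interpret PZ: prob_space PZ by fact
  interpret PR: prob_space PR by fact
  define SD where "SD = sample_dist n PZ"
  define MM where "MM = SD \<Otimes>\<^sub>M PR"
  define Lk where "Lk j sr = loo_kernel PZ K j (fst sr) (snd sr)" for j sr
  interpret SD: prob_space SD unfolding SD_def sample_dist_def by (rule prob_space_PiM) (rule PZ)
  interpret SDR: pair_prob_space SD PR ..
  interpret MM: prob_space MM unfolding MM_def by (intro prob_space_pair SD.prob_space_axioms PR)
  have ab: "a \<le> b" using bounded[of undefined undefined] by linarith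
  define Bd where "Bd = \<bar>a\<bar> + \<bar>b\<bar>"
  have lb: "\<bar>loss w z\<bar> \<le> Bd" for w z using bounded[of w z] unfolding Bd_def by linarith
  have Km[measurable]: "K \<in> MM \<rightarrow>\<^sub>M prob_algebra borel" using K_meas by (simp add: MM_def SD_def)
  have Ks[measurable]: "K \<in> MM \<rightarrow>\<^sub>M subprob_algebra borel" using Km by (rule measurable_prob_algebraD)
  have Kp: "prob_space (K sr)" "sets (K sr) = sets borel" if "sr \<in> space MM" for sr
    using kernel_prob[OF Km that] by auto
  have lm[measurable]: "(\<lambda>(w, z). loss w z) \<in> borel_measurable (borel \<Otimes>\<^sub>M PZ)" by (rule loss_meas)
  have lw: "(\<lambda>w. loss w z) \<in> borel_measurable borel" if "z \<in> space PZ" for z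
  proof -
    have "(\<lambda>w. (w, z)) \<in> borel \<rightarrow>\<^sub>M borel \<Otimes>\<^sub>M PZ" using that by simp
    from measurable_compose[OF this lm] show ?thesis by simp
  qed
  have spSD: "space SD = PiE {0..<n} (\<lambda>_. space PZ)" by (simp add: SD_def sample_dist_def space_PiM)
  have spMM: "sr \<in> space MM \<longleftrightarrow> fst sr \<in> space SD \<and> snd sr \<in> space PR" for sr
    by (cases sr) (simp add: MM_def space_pair_measure)
  have comp: "fst sr j \<in> space PZ" if "sr \<in> space MM" "j < n" for sr j
  proof -
    have "fst sr \<in> PiE {0..<n} (\<lambda>_. space PZ)" using that(1) spMM spSD by simp
    then show ?thesis using that(2) by (metis PiE_mem atLeastLessThan_iff zero_le)
  qed
  have add_dim_SD: "(\<lambda>(X, x). X(j := x)) \<in> SD \<Otimes>\<^sub>M PZ \<rightarrow>\<^sub>M SD" if "j < n" for j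
    using measurable_add_dim[of j "{0..<n}" "\<lambda>_. PZ"] that unfolding SD_def sample_dist_def
    by (simp add: insert_absorb)
  have upd_m: "(\<lambda>p. ((fst (fst p))(j := snd p), snd (fst p))) \<in> MM \<Otimes>\<^sub>M PZ \<rightarrow>\<^sub>M MM" if "j < n" for j
  proof -
    have "(\<lambda>p. (fst (fst p), snd p)) \<in> MM \<Otimes>\<^sub>M PZ \<rightarrow>\<^sub>M SD \<Otimes>\<^sub>M PZ"
      unfolding MM_def by measurable
    from measurable_compose[OF this add_dim_SD[OF that]]
    have "(\<lambda>p. (fst (fst p))(j := snd p)) \<in> MM \<Otimes>\<^sub>M PZ \<rightarrow>\<^sub>M SD" by simp
    moreover have "(\<lambda>p. snd (fst p)) \<in> MM \<Otimes>\<^sub>M PZ \<rightarrow>\<^sub>M PR" unfolding MM_def by measurable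
    ultimately show ?thesis unfolding MM_def by (rule measurable_Pair)
  qed
  have Kupd: "(\<lambda>p. K ((fst (fst p))(j := snd p), snd (fst p))) \<in> MM \<Otimes>\<^sub>M PZ \<rightarrow>\<^sub>M subprob_algebra borel"
    if "j < n" for j
    by (rule measurable_compose[OF upd_m[OF that] Ks])
  have Lk_sub: "Lk j \<in> MM \<rightarrow>\<^sub>M subprob_algebra borel" if j: "j < n" for j
  proof -
    have "(\<lambda>sr. PZ \<bind> (\<lambda>z. K ((fst sr)(j := z), snd sr))) \<in> MM \<rightarrow>\<^sub>M subprob_algebra borel"
    proof (rule measurable_bind'[where N=PZ])
      show "(\<lambda>sr. PZ) \<in> MM \<rightarrow>\<^sub>M subprob_algebra PZ"
        by (rule measurable_const) (auto simp: space_subprob_algebra PZ.subprob_space_axioms)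
      show "(\<lambda>(sr, z). K ((fst sr)(j := z), snd sr)) \<in> MM \<Otimes>\<^sub>M PZ \<rightarrow>\<^sub>M subprob_algebra borel"
        using Kupd[OF j] by (simp add: case_prod_beta')
    qed
    moreover have "Lk j = (\<lambda>sr. PZ \<bind> (\<lambda>z. K ((fst sr)(j := z), snd sr)))"
      by (rule ext) (simp add: Lk_def loo_kernel_def)
    ultimately show ?thesis by simp
  qed
  have Kz: "(\<lambda>z. K ((fst sr)(j := z), snd sr)) \<in> PZ \<rightarrow>\<^sub>M subprob_algebra borel"
    if "sr \<in> space MM" "j < n" for sr j
  proof -
    have "(\<lambda>z. (sr, z)) \<in> PZ \<rightarrow>\<^sub>M MM \<Otimes>\<^sub>M PZ" using that by simp
    from measurable_compose[OF this Kupd[OF that(2)]] show ?thesis by simp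
  qed
  have Kz_prob: "prob_space (K ((fst sr)(j := z), snd sr))" "sets (K ((fst sr)(j := z), snd sr)) = sets borel"
    if "sr \<in> space MM" "j < n" "z \<in> space PZ" for sr j z
  proof -
    have "(sr, z) \<in> space (MM \<Otimes>\<^sub>M PZ)" using that by (simp add: space_pair_measure)
    then have "((fst sr)(j := z), snd sr) \<in> space MM"
      using measurable_space[OF upd_m[OF that(2)]] by fastforce
    then show "prob_space (K ((fst sr)(j := z), snd sr))" "sets (K ((fst sr)(j := z), snd sr)) = sets borel"
      using Kp by auto
  qed
  have Lp: "prob_space (Lk j sr)" "sets (Lk j sr) = sets borel" if "sr \<in> space MM" "j < n" for sr j
  proof -
    show "prob_space (Lk j sr)" unfolding Lk_def loo_kernel_def
      by (rule PZ.prob_space_bind[OF _ Kz[OF that]]) (use Kz_prob[OF that] in auto)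
    show "sets (Lk j sr) = sets borel" unfolding Lk_def loo_kernel_def
      by (rule sets_bind[where N=borel]) (use Kz_prob[OF that] PZ.not_empty in auto)
  qed
  have Lk_m: "Lk j \<in> MM \<rightarrow>\<^sub>M prob_algebra borel" if "j < n" for j
    by (rule measurable_prob_algebraI) (use Lp[OF _ that] Lk_sub[OF that] in auto)
  define B where "B j sr = (\<integral>w. loss w (fst sr j) \<partial>K sr)" for j sr
  define C where "C j sr = (\<integral>w. loss w (fst sr j) \<partial>Lk j sr)" for j sr
  define A where "A sr = (\<integral>w. (\<integral>z. loss w z \<partial>PZ) \<partial>K sr)" for sr
  define TV where "TV j sr = tv_dist (K sr) (Lk j sr)" for j sr
  define PS where "PS j sr = Psi (rel_entropy (K sr) (Lk j sr))" for j sr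
  have lj_m: "(\<lambda>(sr, w). loss w (fst sr j)) \<in> borel_measurable (MM \<Otimes>\<^sub>M borel)" if "j < n" for j
  proof -
    have cj: "(\<lambda>sr. fst sr j) \<in> MM \<rightarrow>\<^sub>M PZ"
      unfolding MM_def SD_def sample_dist_def
      by (rule measurable_compose[OF measurable_fst measurable_component_singleton]) (use that in simp)
    have "(\<lambda>p. (snd p, fst (fst p) j)) \<in> MM \<Otimes>\<^sub>M borel \<rightarrow>\<^sub>M borel \<Otimes>\<^sub>M PZ"
      by (intro measurable_Pair measurable_snd measurable_compose[OF measurable_fst cj])
    from measurable_compose[OF this lm] show ?thesis by (simp add: case_prod_beta')
  qed
  have Bm: "B j \<in> borel_measurable MM" if "j < n" for j
    unfolding B_def by (rule integral_measurable_kernel2[OF lj_m[OF that] Ks])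
  have Cm: "C j \<in> borel_measurable MM" if "j < n" for j
    unfolding C_def by (rule integral_measurable_kernel2[OF lj_m[OF that] Lk_sub[OF that]])
  have iz_m: "(\<lambda>w. \<integral>z. loss w z \<partial>PZ) \<in> borel_measurable borel"
    by (rule PZ.borel_measurable_lebesgue_integral) (use lm in simp)
  have Am: "A \<in> borel_measurable MM"
  proof -
    have "(\<lambda>(sr, w). \<integral>z. loss w z \<partial>PZ) \<in> borel_measurable (MM \<Otimes>\<^sub>M borel)"
      using measurable_compose[OF measurable_snd iz_m] by (simp add: case_prod_beta')
    then show ?thesis unfolding A_def by (rule integral_measurable_kernel2[OF _ Ks])
  qed
  have TVm: "TV j \<in> borel_measurable MM" if "j < n" for j
    unfolding TV_def by (rule measurable_tv[OF Km Lk_m[OF that]])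
  have PSm: "PS j \<in> borel_measurable MM" if "j < n" for j
    unfolding PS_def by (rule measurable_Psi_KL[OF Km Lk_m[OF that]])
  have Bb: "\<bar>B j sr\<bar> \<le> Bd" "\<bar>C j sr\<bar> \<le> Bd" if "sr \<in> space MM" "j < n" for j sr
    unfolding B_def C_def using Kp[OF that(1)] Lp[OF that] lb by (auto intro!: abs_integral_le_const)
  have Ab: "\<bar>A sr\<bar> \<le> Bd" if "sr \<in> space MM" for sr
    unfolding A_def using Kp[OF that] lb by (auto intro!: abs_integral_le_const[OF Kp(1)[OF that]] abs_integral_le_const[OF PZ])
  have TVb: "0 \<le> TV j sr" "TV j sr \<le> 1" if "sr \<in> space MM" "j < n" for j sr
  proof -
    show "0 \<le> TV j sr" unfolding TV_def by (rule tv_nonneg[OF Kp(1)[OF that(1)] Lp(1)[OF that]])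
    have "TV j sr \<le> PS j sr" unfolding TV_def PS_def
      by (rule tv_le_Psi[OF Kp(1)[OF that(1)] Lp(1)[OF that]]) (use Kp(2)[OF that(1)] Lp(2)[OF that] in simp)
    moreover have "PS j sr \<le> 1" unfolding PS_def by (rule Psi_le_1)
    ultimately show "TV j sr \<le> 1" by simp
  qed
  define Phi where "Phi p = (\<integral>w. loss w (snd p) \<partial>K (fst p))" for p
  have Phim: "Phi \<in> borel_measurable (MM \<Otimes>\<^sub>M PZ)"
  proof -
    have "(\<lambda>(p, w). loss w (snd p)) \<in> borel_measurable ((MM \<Otimes>\<^sub>M PZ) \<Otimes>\<^sub>M borel)"
    proof -
      have "(\<lambda>q. (snd q, snd (fst q))) \<in> (MM \<Otimes>\<^sub>M PZ) \<Otimes>\<^sub>M borel \<rightarrow>\<^sub>M borel \<Otimes>\<^sub>M PZ"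
        by measurable
      from measurable_compose[OF this lm] show ?thesis by (simp add: case_prod_beta')
    qed
    moreover have "(\<lambda>p. K (fst p)) \<in> MM \<Otimes>\<^sub>M PZ \<rightarrow>\<^sub>M subprob_algebra borel"
      by (rule measurable_compose[OF measurable_fst Ks])
    ultimately show ?thesis unfolding Phi_def by (rule integral_measurable_kernel2)
  qed
  have Phib: "\<bar>Phi p\<bar> \<le> Bd" if "p \<in> space (MM \<Otimes>\<^sub>M PZ)" for p
  proof -
    have "fst p \<in> space MM" using that by (auto simp: space_pair_measure mem_Times_iff)
    then show ?thesis unfolding Phi_def using lb by (auto intro!: abs_integral_le_const[OF Kp(1)])
  qed
  have Aeq: "A sr = (\<integral>z. Phi (sr, z) \<partial>PZ)" if sr: "sr \<in> space MM" for sr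
  proof -
    interpret Ksr: prob_space "K sr" by (rule Kp(1)[OF sr])
    interpret KZ: pair_sigma_finite "K sr" PZ ..
    interpret KZ': pair_prob_space "K sr" PZ ..
    have sets_eq: "sets (K sr \<Otimes>\<^sub>M PZ) = sets (borel \<Otimes>\<^sub>M PZ)"
      by (rule sets_pair_measure_cong[OF Kp(2)[OF sr] refl])
    have m: "(\<lambda>(w, z). loss w z) \<in> borel_measurable (K sr \<Otimes>\<^sub>M PZ)"
      using lm measurable_cong_sets[OF sets_eq refl] by blast
    have int: "integrable (K sr \<Otimes>\<^sub>M PZ) (\<lambda>(w, z). loss w z)"
      by (rule KZ'.integrable_const_bound[where B=Bd]) (use m lb in auto)
    show ?thesis unfolding A_def Phi_def using KZ.Fubini_integral[OF int] by simp
  qed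
  have Ceq: "C j sr = (\<integral>z. Phi (((fst sr)(j := z), snd sr), fst sr j) \<partial>PZ)"
    if sr: "sr \<in> space MM" and j: "j < n" for sr j
  proof -
    have "C j sr = (\<integral>w. loss w (fst sr j) \<partial>(PZ \<bind> (\<lambda>z. K ((fst sr)(j := z), snd sr))))"
      by (simp add: C_def Lk_def loo_kernel_def)
    also have "\<dots> = (\<integral>z. (\<integral>w. loss w (fst sr j) \<partial>K ((fst sr)(j := z), snd sr)) \<partial>PZ)"
    proof (rule integral_bind[where B=Bd and B'=1])
      show "(\<lambda>w. loss w (fst sr j)) \<in> borel_measurable borel" by (rule lw[OF comp[OF sr j]])
      show "\<bar>loss w (fst sr j)\<bar> \<le> Bd" for w by (rule lb)
      show "(\<lambda>z. K ((fst sr)(j := z), snd sr)) \<in> PZ \<rightarrow>\<^sub>M subprob_algebra borel" by (rule Kz[OF sr j])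
      show "finite_measure PZ" by unfold_locales
      show "AE z in PZ. emeasure (K ((fst sr)(j := z), snd sr)) (space (K ((fst sr)(j := z), snd sr))) \<le> ennreal 1"
      proof (rule AE_I2)
        fix z assume "z \<in> space PZ"
        then have "emeasure (K ((fst sr)(j := z), snd sr)) (space (K ((fst sr)(j := z), snd sr))) = 1"
          using Kz_prob[OF sr j] prob_space.emeasure_space_1 by blast
        then show "emeasure (K ((fst sr)(j := z), snd sr)) (space (K ((fst sr)(j := z), snd sr))) \<le> ennreal 1"
          by simp
      qed
    qed
    finally show ?thesis by (simp add: Phi_def)
  qed
  have keyr: "(\<integral>s. A (s, r) \<partial>SD) = (\<integral>s. C j (s, r) \<partial>SD)" if r: "r \<in> space PR" and j: "j < n" for r j
  proof -
    define G where "G s z = Phi ((s, r), z)" for s z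
    have Gm: "(\<lambda>(s, z). G s z) \<in> borel_measurable (PiM {0..<n} (\<lambda>_. PZ) \<Otimes>\<^sub>M PZ)"
    proof -
      have "(\<lambda>p. ((fst p, r), snd p)) \<in> SD \<Otimes>\<^sub>M PZ \<rightarrow>\<^sub>M MM \<Otimes>\<^sub>M PZ"
        unfolding MM_def using r by measurable
      from measurable_compose[OF this Phim] show ?thesis
        by (simp add: G_def case_prod_beta' SD_def sample_dist_def)
    qed
    have Gb: "\<bar>G s z\<bar> \<le> Bd" if "s \<in> space (PiM {0..<n} (\<lambda>_. PZ))" "z \<in> space PZ" for s z
      unfolding G_def using that r by (intro Phib) (simp add: space_pair_measure MM_def SD_def sample_dist_def)
    have "(\<integral>s. A (s, r) \<partial>SD) = (\<integral>s. (\<integral>z. G s z \<partial>PZ) \<partial>SD)"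
      by (rule Bochner_Integration.integral_cong[OF refl]) (use r in \<open>simp add: Aeq spMM G_def\<close>)
    also have "\<dots> = (\<integral>s. (\<integral>z. G (s(j := z)) (s j) \<partial>PZ) \<partial>SD)"
      unfolding SD_def sample_dist_def by (rule swap_identity[OF PZ j Gm Gb])
    also have "\<dots> = (\<integral>s. C j (s, r) \<partial>SD)"
      by (rule Bochner_Integration.integral_cong[OF refl]) (use r j in \<open>simp add: Ceq spMM G_def\<close>)
    finally show ?thesis .
  qed
  have intMM: "integrable MM F" if "F \<in> borel_measurable MM" "\<And>sr. sr \<in> space MM \<Longrightarrow> \<bar>F sr\<bar> \<le> Bd" for F
    by (rule MM.integrable_const_bound[where B=Bd]) (use that in auto)
  have key: "(\<integral>sr. A sr \<partial>MM) = (\<integral>sr. C j sr \<partial>MM)" if j: "j < n" for j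
  proof -
    have "(\<integral>sr. A sr \<partial>MM) = (\<integral>r. (\<integral>s. A (s, r) \<partial>SD) \<partial>PR)"
      unfolding MM_def by (rule SDR.integral_snd[symmetric, where f="\<lambda>s r. A (s, r)", simplified])
        (use intMM[OF Am Ab] in \<open>simp add: MM_def\<close>)
    also have "\<dots> = (\<integral>r. (\<integral>s. C j (s, r) \<partial>SD) \<partial>PR)"
      by (rule Bochner_Integration.integral_cong[OF refl keyr[OF _ j]])
    also have "\<dots> = (\<integral>sr. C j sr \<partial>MM)"
      unfolding MM_def by (rule SDR.integral_snd[where f="\<lambda>s r. C j (s, r)", simplified])
        (use intMM[OF Cm[OF j] Bb(2)[OF _ j]] in \<open>simp add: MM_def\<close>)
    finally show ?thesis .
  qed
  have inner: "(\<integral>w. (\<integral>z. loss w z \<partial>PZ) - (\<Sum>i<n. loss w (fst sr i)) / real n \<partial>K sr)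
      = A sr - (\<Sum>i<n. B i sr) / real n" if sr: "sr \<in> space MM" for sr
  proof -
    interpret Ksr: prob_space "K sr" by (rule Kp(1)[OF sr])
    have i0: "integrable (K sr) (\<lambda>w. \<integral>z. loss w z \<partial>PZ)"
    proof (rule Ksr.integrable_const_bound[where B=Bd])
      show "AE w in K sr. norm (\<integral>z. loss w z \<partial>PZ) \<le> Bd"
        using lb by (auto intro!: AE_I2 abs_integral_le_const[OF PZ])
      show "(\<lambda>w. \<integral>z. loss w z \<partial>PZ) \<in> borel_measurable (K sr)"
        using iz_m measurable_cong_sets[OF Kp(2)[OF sr] refl] by blast
    qed
    have ii: "integrable (K sr) (\<lambda>w. loss w (fst sr i))" if i: "i \<in> {..<n}" for i
    proof (rule Ksr.integrable_const_bound[where B=Bd])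
      show "AE w in K sr. norm (loss w (fst sr i)) \<le> Bd" using lb by auto
      have "(\<lambda>w. loss w (fst sr i)) \<in> borel_measurable borel" using lw comp[OF sr] i by simp
      then show "(\<lambda>w. loss w (fst sr i)) \<in> borel_measurable (K sr)"
        using measurable_cong_sets[OF Kp(2)[OF sr] refl] by blast
    qed
    have "(\<integral>w. (\<integral>z. loss w z \<partial>PZ) - (\<Sum>i<n. loss w (fst sr i)) / real n \<partial>K sr)
        = A sr - (\<integral>w. (\<Sum>i<n. loss w (fst sr i)) / real n \<partial>K sr)"
      unfolding A_def by (rule Bochner_Integration.integral_diff[OF i0]) (use ii in \<open>auto intro!: integrable_divide integrable_sum\<close>)
    also have "(\<integral>w. (\<Sum>i<n. loss w (fst sr i)) / real n \<partial>K sr) = (\<integral>w. (\<Sum>i<n. loss w (fst sr i)) \<partial>K sr) / real n"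
      by simp
    also have "(\<integral>w. (\<Sum>i<n. loss w (fst sr i)) \<partial>K sr) = (\<Sum>i<n. B i sr)"
      unfolding B_def by (rule Bochner_Integration.integral_sum) (rule ii)
    finally show ?thesis .
  qed
  have intA: "integrable MM A" by (rule intMM[OF Am Ab])
  have intB: "integrable MM (B i)" "integrable MM (C i)" if "i < n" for i
    using intMM[OF Bm[OF that] Bb(1)[OF _ that]] intMM[OF Cm[OF that] Bb(2)[OF _ that]] by auto
  have gen_eq: "exp_gen n PZ PR K loss = (\<integral>sr. A sr \<partial>MM) - (\<Sum>i<n. \<integral>sr. B i sr \<partial>MM) / real n"
  proof -
    have "exp_gen n PZ PR K loss = (\<integral>sr. A sr - (\<Sum>i<n. B i sr) / real n \<partial>MM)"
      unfolding exp_gen_def SD_def[symmetric] MM_def[symmetric]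
      by (rule Bochner_Integration.integral_cong[OF refl inner])
    also have "\<dots> = (\<integral>sr. A sr \<partial>MM) - (\<integral>sr. (\<Sum>i<n. B i sr) / real n \<partial>MM)"
      by (rule Bochner_Integration.integral_diff[OF intA]) (use intB in \<open>auto intro!: integrable_divide integrable_sum\<close>)
    also have "(\<integral>sr. (\<Sum>i<n. B i sr) / real n \<partial>MM) = (\<integral>sr. (\<Sum>i<n. B i sr) \<partial>MM) / real n"
      by simp
    also have "(\<integral>sr. (\<Sum>i<n. B i sr) \<partial>MM) = (\<Sum>i<n. \<integral>sr. B i sr \<partial>MM)"
      by (rule Bochner_Integration.integral_sum) (use intB in auto)
    finally show ?thesis .
  qed
  have Aavg: "(\<integral>sr. A sr \<partial>MM) = (\<Sum>j<n. \<integral>sr. C j sr \<partial>MM) / real n"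
  proof -
    have "(\<Sum>j<n. \<integral>sr. C j sr \<partial>MM) = (\<Sum>j<n. \<integral>sr. A sr \<partial>MM)"
      by (rule sum.cong[OF refl]) (use key in auto)
    also have "\<dots> = real n * (\<integral>sr. A sr \<partial>MM)" by simp
    finally show ?thesis using n_pos by simp
  qed
  have gen_eq2: "exp_gen n PZ PR K loss = (\<Sum>j<n. (\<integral>sr. C j sr - B j sr \<partial>MM)) / real n"
  proof -
    have "(\<Sum>j<n. (\<integral>sr. C j sr - B j sr \<partial>MM)) = (\<Sum>j<n. (\<integral>sr. C j sr \<partial>MM) - (\<integral>sr. B j sr \<partial>MM))"
      by (rule sum.cong[OF refl]) (use intB in \<open>auto intro!: Bochner_Integration.integral_diff\<close>)
    also have "\<dots> = (\<Sum>j<n. \<integral>sr. C j sr \<partial>MM) - (\<Sum>j<n. \<integral>sr. B j sr \<partial>MM)"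
      by (rule sum_subtractf)
    finally show ?thesis unfolding gen_eq Aavg by (simp add: diff_divide_distrib)
  qed
  have intTV: "integrable MM (TV j)" if "j < n" for j
    by (rule MM.integrable_const_bound[where B=1]) (use TVm[OF that] TVb[OF _ that] in auto)
  have PSb: "0 \<le> PS j sr" "TV j sr \<le> PS j sr" if "sr \<in> space MM" "j < n" for j sr
  proof -
    show "0 \<le> PS j sr" unfolding PS_def
      by (rule Psi_nonneg[OF rel_entropy_nonneg[OF Kp(1)[OF that(1)] Lp(1)[OF that]]])
        (use Kp(2)[OF that(1)] Lp(2)[OF that] in simp)
    show "TV j sr \<le> PS j sr" unfolding TV_def PS_def
      by (rule tv_le_Psi[OF Kp(1)[OF that(1)] Lp(1)[OF that]]) (use Kp(2)[OF that(1)] Lp(2)[OF that] in simp)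
  qed
  have intPS: "integrable MM (PS j)" if "j < n" for j
    by (rule MM.integrable_const_bound[where B=1])
       (use PSm[OF that] PSb[OF _ that] Psi_le_1 in \<open>auto simp: PS_def\<close>)
  have termj: "\<bar>\<integral>sr. C j sr - B j sr \<partial>MM\<bar> \<le> (b - a) * (\<integral>sr. TV j sr \<partial>MM)" if j: "j < n" for j
  proof -
    have "\<bar>\<integral>sr. C j sr - B j sr \<partial>MM\<bar> \<le> (\<integral>sr. \<bar>C j sr - B j sr\<bar> \<partial>MM)"
      by (rule integral_abs_bound)
    also have "\<dots> \<le> (\<integral>sr. (b - a) * TV j sr \<partial>MM)"
    proof (rule integral_mono)
      show "integrable MM (\<lambda>sr. \<bar>C j sr - B j sr\<bar>)" using intB[OF j] by auto
      show "integrable MM (\<lambda>sr. (b - a) * TV j sr)" using intTV[OF j] by auto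
      fix sr assume sr: "sr \<in> space MM"
      have fm: "(\<lambda>w. loss w (fst sr j)) \<in> borel_measurable (K sr)"
        using lw[OF comp[OF sr j]] measurable_cong_sets[OF Kp(2)[OF sr] refl] by blast
      have "\<bar>(\<integral>w. loss w (fst sr j) \<partial>K sr) - (\<integral>w. loss w (fst sr j) \<partial>Lk j sr)\<bar> \<le> (b - a) * tv_dist (K sr) (Lk j sr)"
        by (rule abs_integral_diff_le_tv[OF Kp(1)[OF sr] Lp(1)[OF sr j] _ fm bounded])
           (use Kp(2)[OF sr] Lp(2)[OF sr j] in simp)
      then show "\<bar>C j sr - B j sr\<bar> \<le> (b - a) * TV j sr"
        unfolding B_def C_def TV_def by (simp add: abs_minus_commute)
    qed
    also have "\<dots> = (b - a) * (\<integral>sr. TV j sr \<partial>MM)" by simp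
    finally show ?thesis .
  qed
  have first: "\<bar>exp_gen n PZ PR K loss\<bar> \<le> (b - a) * ((1 / real n) * (\<Sum>j<n. \<integral>sr. TV j sr \<partial>MM))"
  proof -
    have "\<bar>exp_gen n PZ PR K loss\<bar> = \<bar>\<Sum>j<n. (\<integral>sr. C j sr - B j sr \<partial>MM)\<bar> / real n"
      unfolding gen_eq2 by simp
    also have "\<dots> \<le> (\<Sum>j<n. \<bar>\<integral>sr. C j sr - B j sr \<partial>MM\<bar>) / real n"
      by (intro divide_right_mono sum_abs) auto
    also have "\<dots> \<le> (\<Sum>j<n. (b - a) * (\<integral>sr. TV j sr \<partial>MM)) / real n"
      by (intro divide_right_mono sum_mono termj) auto
    also have "\<dots> = (b - a) * ((1 / real n) * (\<Sum>j<n. \<integral>sr. TV j sr \<partial>MM))"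
      by (simp add: sum_distrib_left sum_divide_distrib)
    finally show ?thesis .
  qed
  have second: "(b - a) * ((1 / real n) * (\<Sum>j<n. \<integral>sr. TV j sr \<partial>MM))
      \<le> (b - a) / real n * (\<Sum>j<n. \<integral>sr. PS j sr \<partial>MM)"
  proof -
    have "(\<Sum>j<n. \<integral>sr. TV j sr \<partial>MM) \<le> (\<Sum>j<n. \<integral>sr. PS j sr \<partial>MM)"
      by (intro sum_mono integral_mono) (use intTV intPS PSb in auto)
    then have "(b - a) / real n * (\<Sum>j<n. \<integral>sr. TV j sr \<partial>MM) \<le> (b - a) / real n * (\<Sum>j<n. \<integral>sr. PS j sr \<partial>MM)"
      using ab by (intro mult_left_mono) auto
    then show ?thesis by simp
  qed
  show ?thesis using first second unfolding TV_def PS_def Lk_def MM_def SD_def by simp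
qed

end
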